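(* Cograph recognition is in $\mathrm{LOGSPACE}$: there is a logarithmic-space deterministic Turing machine that decides, given a graph $G$, whether $G$ is a cograph.
   Context: Graphs are finite, simple, undirected, with nonempty vertex set. The join of two graphs $G$ and $H$ is obtained from their disjoint union by adding all edges $\{v,w\}$ with $v$ a vertex of $G$ and $w$ a vertex of $H$. A graph is a cograph if it can be constructed from single-vertex graphs by repeated disjoint union and join operations (i.e., it is isomorphic to such a graph). *)

theory Defs
  imports Complex_Main
begin

text \<open>A graph is given by a finite nonempty vertex set V (of naturals) and an adjacency
predicate E; only E restricted to V matters. Graphs built from single vertices by
disjoint union and join:\<close>

inductive built_cograph :: "nat set \<Rightarrow> (nat \<Rightarrow> nat \<Rightarrow> bool) \<Rightarrow> bool" where
  single: "built_cograph {v} (\<lambda>_ _. False)"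
| union: "\<lbrakk>built_cograph V1 E1; built_cograph V2 E2; V1 \<inter> V2 = {}\<rbrakk>
          \<Longrightarrow> built_cograph (V1 \<union> V2) (\<lambda>x y. E1 x y \<or> E2 x y)"
| join: "\<lbrakk>built_cograph V1 E1; built_cograph V2 E2; V1 \<inter> V2 = {}\<rbrakk>
          \<Longrightarrow> built_cograph (V1 \<union> V2)
                (\<lambda>x y. E1 x y \<or> E2 x y \<or> (x \<in> V1 \<and> y \<in> V2) \<or> (x \<in> V2 \<and> y \<in> V1))"

definition is_cograph :: "nat set \<Rightarrow> (nat \<Rightarrow> nat \<Rightarrow> bool) \<Rightarrow> bool" where
  "is_cograph V E \<longleftrightarrow> (\<exists>V' E' f. built_cograph V' E' \<and> bij_betw f V V' \<and>
      (\<forall>x\<in>V. \<forall>y\<in>V. E x y \<longleftrightarrow> E' (f x) (f y)))"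

definition encodes_graph :: "bool list \<Rightarrow> nat \<Rightarrow> bool" where
  "encodes_graph w n \<longleftrightarrow> n \<ge> 1 \<and> length w = n * n \<and>
     (\<forall>i<n. \<not> w ! (i * n + i)) \<and>
     (\<forall>i<n. \<forall>j<n. w ! (i * n + j) = w ! (j * n + i))"

definition cograph_lang :: "bool list set" where
  "cograph_lang = {w. \<exists>n. encodes_graph w n \<and> is_cograph {0..<n} (\<lambda>i j. w ! (i * n + j))}"

section \<open>Deterministic Turing machines with read-only input tape and one work tape\<close>

text \<open>States are 0..<nstates, work symbols 0..<nsyms (0 = blank). The input head reads
positions 0..length w + 1, where positions 0 and length w + 1 hold end markers (symbol 0),
and position i (1 \<le> i \<le> length w) holds 1 (for False) or 2 (for True).
The transition maps (state, input symbol, work symbol) to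
(new state, written work symbol, input head move, work head move), moves in {-1,0,1}.\<close>

record tm =
  nstates :: nat
  nsyms :: nat
  start :: nat
  acc :: nat
  rej :: nat
  delta :: "nat \<Rightarrow> nat \<Rightarrow> nat \<Rightarrow> nat \<times> nat \<times> int \<times> int"

definition wf_tm :: "tm \<Rightarrow> bool" where
  "wf_tm M \<longleftrightarrow> nsyms M \<ge> 1 \<and> start M < nstates M \<and> acc M < nstates M \<and>
     rej M < nstates M \<and> acc M \<noteq> rej M \<and>
     (\<forall>q<nstates M. \<forall>a\<le>2. \<forall>s<nsyms M.
        (case delta M q a s of (q', s', di, dw) \<Rightarrow>
           q' < nstates M \<and> s' < nsyms M \<and> di \<in> {-1,0,1} \<and> dw \<in> {-1,0,1}))"

definition inp_sym :: "bool list \<Rightarrow> nat \<Rightarrow> nat" where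
  "inp_sym w i = (if i = 0 \<or> i > length w then 0 else if w ! (i - 1) then 2 else 1)"

text \<open>Configuration: (state, input head position, work head position, work tape contents).\<close>
type_synonym conf = "nat \<times> nat \<times> nat \<times> (nat \<Rightarrow> nat)"

definition init_conf :: "tm \<Rightarrow> conf" where
  "init_conf M = (start M, 0, 0, \<lambda>_. 0)"

definition step :: "tm \<Rightarrow> bool list \<Rightarrow> conf \<Rightarrow> conf" where
  "step M w c = (case c of (q, ih, wh, tp) \<Rightarrow>
     if q = acc M \<or> q = rej M then c else
     (case delta M q (inp_sym w ih) (tp wh) of (q', s', di, dw) \<Rightarrow>
        (q', nat (min (int (length w) + 1) (max 0 (int ih + di))),
             nat (max 0 (int wh + dw)), tp(wh := s'))))"

definition run :: "tm \<Rightarrow> bool list \<Rightarrow> nat \<Rightarrow> conf" where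
  "run M w t = (step M w ^^ t) (init_conf M)"

definition state_of :: "conf \<Rightarrow> nat" where "state_of c = fst c"
definition work_head :: "conf \<Rightarrow> nat" where "work_head c = fst (snd (snd c))"

definition logspace_tm :: "tm \<Rightarrow> bool" where
  "logspace_tm M \<longleftrightarrow> (\<exists>c::real. \<forall>w. \<exists>t.
     (state_of (run M w t) = acc M \<or> state_of (run M w t) = rej M) \<and>
     (\<forall>t'\<le>t. real (work_head (run M w t')) \<le> c * log 2 (real (length w) + 2) + c))"

definition accepts :: "tm \<Rightarrow> bool list \<Rightarrow> bool" where
  "accepts M w \<longleftrightarrow> (\<exists>t. state_of (run M w t) = acc M)"

definition decides :: "tm \<Rightarrow> bool list set \<Rightarrow> bool" where
  "decides M L \<longleftrightarrow> (\<forall>w. accepts M w \<longleftrightarrow> w \<in> L)"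

end

theory Submission
  imports Defs
begin


definition P4 :: "(nat \<Rightarrow> nat \<Rightarrow> bool) \<Rightarrow> nat set \<Rightarrow> bool" where
  "P4 E V \<longleftrightarrow> (\<exists>a\<in>V. \<exists>b\<in>V. \<exists>c\<in>V. \<exists>d\<in>V. E a b \<and> E b c \<and> E c d \<and> \<not> E a c \<and> \<not> E b d \<and> \<not> E a d)"

definition symirr :: "(nat \<Rightarrow> nat \<Rightarrow> bool) \<Rightarrow> nat set \<Rightarrow> bool" where
  "symirr E V \<longleftrightarrow> (\<forall>x\<in>V. \<forall>y\<in>V. (E x y \<longleftrightarrow> E y x)) \<and> (\<forall>x\<in>V. \<not> E x x)"

definition discon :: "(nat \<Rightarrow> nat \<Rightarrow> bool) \<Rightarrow> nat set \<Rightarrow> bool" where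
  "discon E V \<longleftrightarrow> (\<exists>A B. A \<union> B = V \<and> A \<inter> B = {} \<and> A \<noteq> {} \<and> B \<noteq> {} \<and> (\<forall>a\<in>A. \<forall>b\<in>B. \<not> E a b))"

definition coE :: "(nat \<Rightarrow> nat \<Rightarrow> bool) \<Rightarrow> nat \<Rightarrow> nat \<Rightarrow> bool" where
  "coE E x y \<longleftrightarrow> x \<noteq> y \<and> \<not> E x y"

definition ren :: "(nat \<Rightarrow> nat) \<Rightarrow> (nat \<Rightarrow> nat \<Rightarrow> bool) \<Rightarrow> nat \<Rightarrow> nat \<Rightarrow> bool" where
  "ren g E x y \<longleftrightarrow> (\<exists>a b. x = g a \<and> y = g b \<and> E a b)"

lemma built_props:
  assumes "built_cograph V E"
  shows "finite V \<and> V \<noteq> {} \<and> (\<forall>x y. E x y \<longrightarrow> x \<in> V \<and> y \<in> V) \<and> symirr E V \<and> \<not> P4 E V"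
  using assms
proof induction
  case (single v)
  then show ?case by (auto simp: symirr_def P4_def)
next
  case (union V1 E1 V2 E2)
  have sym: "symirr (\<lambda>x y. E1 x y \<or> E2 x y) (V1 \<union> V2)"
    using union unfolding symirr_def by blast
  have np: "\<not> P4 (\<lambda>x y. E1 x y \<or> E2 x y) (V1 \<union> V2)"
  proof
    assume "P4 (\<lambda>x y. E1 x y \<or> E2 x y) (V1 \<union> V2)"
    then obtain a b c d where abcd: "a \<in> V1 \<union> V2" "b \<in> V1 \<union> V2" "c \<in> V1 \<union> V2" "d \<in> V1 \<union> V2"
      and e: "E1 a b \<or> E2 a b" "E1 b c \<or> E2 b c" "E1 c d \<or> E2 c d"
      and n: "\<not> (E1 a c \<or> E2 a c)" "\<not> (E1 b d \<or> E2 b d)" "\<not> (E1 a d \<or> E2 a d)"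
      unfolding P4_def by blast
    show False
    proof (cases "a \<in> V1")
      case True
      then have "E1 a b" "E1 b c" "E1 c d" using e union.IH union.hyps(3) by blast+
      then show ?thesis using union.IH n abcd unfolding P4_def by blast
    next
      case False
      then have "a \<in> V2" using abcd by blast
      then have "E2 a b" "E2 b c" "E2 c d" using e union.IH union.hyps(3) by blast+
      then show ?thesis using union.IH n abcd unfolding P4_def by blast
    qed
  qed
  show ?case using union sym np by auto
next
  case (join V1 E1 V2 E2)
  let ?E = "\<lambda>x y. E1 x y \<or> E2 x y \<or> (x \<in> V1 \<and> y \<in> V2) \<or> (x \<in> V2 \<and> y \<in> V1)"
  have sym: "symirr ?E (V1 \<union> V2)"
    using join unfolding symirr_def by blast
  have np: "\<not> P4 ?E (V1 \<union> V2)"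
  proof
    assume "P4 ?E (V1 \<union> V2)"
    then obtain a b c d where abcd: "a \<in> V1 \<union> V2" "b \<in> V1 \<union> V2" "c \<in> V1 \<union> V2" "d \<in> V1 \<union> V2"
      and e: "?E a b" "?E b c" "?E c d"
      and n: "\<not> ?E a c" "\<not> ?E b d" "\<not> ?E a d"
      unfolding P4_def by blast
    show False
    proof (cases "a \<in> V1")
      case True
      then have "c \<in> V1" "d \<in> V1" using n abcd by blast+
      then have "b \<in> V1" using n abcd by blast
      then have "E1 a b" "E1 b c" "E1 c d" using e join.IH join.hyps(3) \<open>a \<in> V1\<close> \<open>c \<in> V1\<close> \<open>d \<in> V1\<close> by blast+
      then show ?thesis using join.IH n abcd \<open>a \<in> V1\<close> \<open>b \<in> V1\<close> \<open>c \<in> V1\<close> \<open>d \<in> V1\<close> unfolding P4_def by blast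
    next
      case False
      then have "a \<in> V2" using abcd by blast
      then have "c \<in> V2" "d \<in> V2" using n abcd by blast+
      then have "b \<in> V2" using n abcd by blast
      then have "E2 a b" "E2 b c" "E2 c d" using e join.IH join.hyps(3) \<open>a \<in> V2\<close> \<open>c \<in> V2\<close> \<open>d \<in> V2\<close> by blast+
      then show ?thesis using join.IH n abcd \<open>a \<in> V2\<close> \<open>b \<in> V2\<close> \<open>c \<in> V2\<close> \<open>d \<in> V2\<close> unfolding P4_def by blast
    qed
  qed
  show ?case using join sym np by auto
qed

lemma cograph_P4free:
  assumes "is_cograph V E" shows "\<not> P4 E V"
proof
  assume "P4 E V"
  obtain V' E' f where b: "built_cograph V' E'" and f: "bij_betw f V V'"
    and e: "\<forall>x\<in>V. \<forall>y\<in>V. E x y \<longleftrightarrow> E' (f x) (f y)"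
    using assms unfolding is_cograph_def by blast
  from \<open>P4 E V\<close> obtain a b c d where "a \<in> V" "b \<in> V" "c \<in> V" "d \<in> V" and
     "E a b \<and> E b c \<and> E c d \<and> \<not> E a c \<and> \<not> E b d \<and> \<not> E a d"
    unfolding P4_def by blast
  then have "P4 E' V'" unfolding P4_def using e f
    by (intro bexI[of _ "f a"] bexI[of _ "f b"] bexI[of _ "f c"] bexI[of _ "f d"])
       (auto simp: bij_betw_def)
  then show False using built_props[OF b] by blast
qed

lemma ren_built:
  assumes "built_cograph V E" "inj g"
  shows "built_cograph (g ` V) (ren g E)"
  using assms(1)
proof induction
  case (single v)
  have "ren g (\<lambda>_ _. False) = (\<lambda>_ _. False)" by (auto simp: ren_def fun_eq_iff)
  then show ?case using built_cograph.single by simp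
next
  case (union V1 E1 V2 E2)
  have eq: "ren g (\<lambda>x y. E1 x y \<or> E2 x y) = (\<lambda>x y. ren g E1 x y \<or> ren g E2 x y)"
    by (auto simp: ren_def fun_eq_iff)
  have "g ` V1 \<inter> g ` V2 = {}" using union.hyps(3) assms(2) by (auto simp: inj_eq)
  then show ?case unfolding eq image_Un using built_cograph.union union.IH by blast
next
  case (join V1 E1 V2 E2)
  have eq: "ren g (\<lambda>x y. E1 x y \<or> E2 x y \<or> (x \<in> V1 \<and> y \<in> V2) \<or> (x \<in> V2 \<and> y \<in> V1)) =
      (\<lambda>x y. ren g E1 x y \<or> ren g E2 x y \<or> (x \<in> g ` V1 \<and> y \<in> g ` V2) \<or> (x \<in> g ` V2 \<and> y \<in> g ` V1))"
    by (auto simp: ren_def fun_eq_iff)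
  have "g ` V1 \<inter> g ` V2 = {}" using join.hyps(3) assms(2) by (auto simp: inj_eq)
  then show ?case unfolding eq image_Un using built_cograph.join join.IH by blast
qed

lemma ren_inj: "inj g \<Longrightarrow> ren g E (g a) (g b) = E a b"
  by (auto simp: ren_def inj_eq)

lemma ren_range: "ren g E x y \<Longrightarrow> x \<in> range g \<and> y \<in> range g"
  by (auto simp: ren_def)

lemma combine:
  assumes "is_cograph A E" "is_cograph B E" "A \<inter> B = {}"
    and cr: "(\<forall>a\<in>A. \<forall>b\<in>B. \<not> E a b \<and> \<not> E b a) \<or> (\<forall>a\<in>A. \<forall>b\<in>B. E a b \<and> E b a)"
  shows "is_cograph (A \<union> B) E"
proof -
  obtain A' EA fa where ba: "built_cograph A' EA" and fa: "bij_betw fa A A'"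
    and ea: "\<forall>x\<in>A. \<forall>y\<in>A. E x y \<longleftrightarrow> EA (fa x) (fa y)"
    using assms(1) unfolding is_cograph_def by blast
  obtain B' EB fb where bb: "built_cograph B' EB" and fb: "bij_betw fb B B'"
    and eb: "\<forall>x\<in>B. \<forall>y\<in>B. E x y \<longleftrightarrow> EB (fb x) (fb y)"
    using assms(2) unfolding is_cograph_def by blast
  define g1 where "g1 = (\<lambda>x::nat. 2 * x)"
  define g2 where "g2 = (\<lambda>x::nat. 2 * x + 1)"
  have i1: "inj g1" and i2: "inj g2" unfolding g1_def g2_def by (auto intro: injI)
  have dis: "g1 ` A' \<inter> g2 ` B' = {}" unfolding g1_def g2_def by auto presburger
  have rg: "range g1 \<inter> range g2 = {}" unfolding g1_def g2_def by auto presburger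
  have b1: "built_cograph (g1 ` A') (ren g1 EA)" using ren_built[OF ba i1] .
  have b2: "built_cograph (g2 ` B') (ren g2 EB)" using ren_built[OF bb i2] .
  define h where "h = (\<lambda>x. if x \<in> A then g1 (fa x) else g2 (fb x))"
  have h1: "bij_betw h A (g1 ` A')"
  proof -
    have "bij_betw (g1 \<circ> fa) A (g1 ` A')"
      using fa i1 by (meson bij_betw_imageI bij_betw_trans inj_on_subset subset_UNIV)
    then show ?thesis by (rule bij_betw_cong[THEN iffD1, rotated]) (auto simp: h_def)
  qed
  have h2: "bij_betw h B (g2 ` B')"
  proof -
    have "bij_betw (g2 \<circ> fb) B (g2 ` B')"
      using fb i2 by (meson bij_betw_imageI bij_betw_trans inj_on_subset subset_UNIV)
    then show ?thesis by (rule bij_betw_cong[THEN iffD1, rotated]) (use assms(3) in \<open>auto simp: h_def\<close>)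
  qed
  have hb: "bij_betw h (A \<union> B) (g1 ` A' \<union> g2 ` B')"
    using bij_betw_combine[OF h1 h2 dis] .
  have hA: "x \<in> A \<Longrightarrow> h x = g1 (fa x)" for x by (simp add: h_def)
  have hB: "x \<in> B \<Longrightarrow> h x = g2 (fb x)" for x using assms(3) by (auto simp: h_def)
  have fa': "x \<in> A \<Longrightarrow> fa x \<in> A'" for x using fa by (auto simp: bij_betw_def)
  have fb': "x \<in> B \<Longrightarrow> fb x \<in> B'" for x using fb by (auto simp: bij_betw_def)
  have rA: "ren g1 EA (h x) (h y) \<longleftrightarrow> (x \<in> A \<and> y \<in> A \<and> E x y)" if "x \<in> A \<union> B" "y \<in> A \<union> B" for x y
  proof (cases "x \<in> A \<and> y \<in> A")
    case True
    then show ?thesis using hA ea ren_inj[OF i1] by simp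
  next
    case False
    then have "h x \<in> range g2 \<or> h y \<in> range g2" using that hB by auto
    then have "\<not> ren g1 EA (h x) (h y)" using ren_range rg by blast
    then show ?thesis using False by blast
  qed
  have rB: "ren g2 EB (h x) (h y) \<longleftrightarrow> (x \<in> B \<and> y \<in> B \<and> E x y)" if "x \<in> A \<union> B" "y \<in> A \<union> B" for x y
  proof (cases "x \<in> B \<and> y \<in> B")
    case True
    then show ?thesis using hB eb ren_inj[OF i2] by simp
  next
    case False
    then have "h x \<in> range g1 \<or> h y \<in> range g1" using that hA by auto
    then have "\<not> ren g2 EB (h x) (h y)" using ren_range rg by blast
    then show ?thesis using False by blast
  qed
  have hx1: "h x \<in> g1 ` A' \<longleftrightarrow> x \<in> A" if "x \<in> A \<union> B" for x
  proof (cases "x \<in> A")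
    case True then show ?thesis using hA fa' by simp
  next
    case False then have "h x \<in> range g2" using hB that by auto
    then show ?thesis using False rg by blast
  qed
  have hx2: "h x \<in> g2 ` B' \<longleftrightarrow> x \<in> B" if "x \<in> A \<union> B" for x
  proof (cases "x \<in> B")
    case True then show ?thesis using hB fb' by simp
  next
    case False then have "h x \<in> range g1" using hA that by auto
    then show ?thesis using False rg by blast
  qed
  show ?thesis
  proof (cases "\<forall>a\<in>A. \<forall>b\<in>B. \<not> E a b \<and> \<not> E b a")
    case True
    have bu: "built_cograph (g1 ` A' \<union> g2 ` B') (\<lambda>x y. ren g1 EA x y \<or> ren g2 EB x y)"
      using built_cograph.union[OF b1 b2 dis] .
    have "\<forall>x\<in>A \<union> B. \<forall>y\<in>A \<union> B. E x y \<longleftrightarrow> (ren g1 EA (h x) (h y) \<or> ren g2 EB (h x) (h y))"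
    proof (intro ballI)
      fix x y assume xy: "x \<in> A \<union> B" "y \<in> A \<union> B"
      show "E x y \<longleftrightarrow> (ren g1 EA (h x) (h y) \<or> ren g2 EB (h x) (h y))"
        unfolding rA[OF xy] rB[OF xy] using True xy by blast
    qed
    then show ?thesis unfolding is_cograph_def using bu hb by blast
  next
    case False
    then have all: "\<forall>a\<in>A. \<forall>b\<in>B. E a b \<and> E b a" using cr by blast
    have bu: "built_cograph (g1 ` A' \<union> g2 ` B') (\<lambda>x y. ren g1 EA x y \<or> ren g2 EB x y \<or>
        (x \<in> g1 ` A' \<and> y \<in> g2 ` B') \<or> (x \<in> g2 ` B' \<and> y \<in> g1 ` A'))"
      using built_cograph.join[OF b1 b2 dis] .
    have "\<forall>x\<in>A \<union> B. \<forall>y\<in>A \<union> B. E x y \<longleftrightarrow> (ren g1 EA (h x) (h y) \<or> ren g2 EB (h x) (h y) \<or>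
        (h x \<in> g1 ` A' \<and> h y \<in> g2 ` B') \<or> (h x \<in> g2 ` B' \<and> h y \<in> g1 ` A'))"
    proof (intro ballI)
      fix x y assume xy: "x \<in> A \<union> B" "y \<in> A \<union> B"
      show "E x y \<longleftrightarrow> (ren g1 EA (h x) (h y) \<or> ren g2 EB (h x) (h y) \<or>
        (h x \<in> g1 ` A' \<and> h y \<in> g2 ` B') \<or> (h x \<in> g2 ` B' \<and> h y \<in> g1 ` A'))"
        unfolding rA[OF xy] rB[OF xy] hx1[OF xy(1)] hx1[OF xy(2)] hx2[OF xy(1)] hx2[OF xy(2)]
        using all xy assms(3) by blast
    qed
    then show ?thesis unfolding is_cograph_def using bu hb by blast
  qed
qed

lemma disconI: "A \<union> B = V \<Longrightarrow> A \<inter> B = {} \<Longrightarrow> A \<noteq> {} \<Longrightarrow> B \<noteq> {} \<Longrightarrow> \<forall>a\<in>A. \<forall>b\<in>B. \<not> E a b \<Longrightarrow> discon E V"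
  unfolding discon_def by blast

lemma core2:
  assumes sym: "\<forall>x\<in>V. \<forall>y\<in>V. (E x y \<longleftrightarrow> E y x)" and np: "\<not> P4 E V" and v: "v \<in> V"
    and part: "A \<union> B = V - {v}" "A \<inter> B = {}" "B \<noteq> {}"
    and noe: "\<forall>a\<in>A. \<forall>b\<in>B. \<not> E a b"
    and u: "u \<in> A" "\<not> E v u"
  shows "discon E V"
proof -
  have AV: "A \<subseteq> V" "B \<subseteq> V" "v \<notin> A" "v \<notin> B" using part by auto
  define X where "X = {x\<in>A. E v x}"
  define Y where "Y = A - X"
  have uY: "u \<in> Y" using u unfolding X_def Y_def by auto
  show ?thesis
  proof (cases "\<exists>z\<in>B. E v z")
    case False
    have "B \<union> (A \<union> {v}) = V" using part v by auto
    moreover have "\<forall>a\<in>B. \<forall>b\<in>A \<union> {v}. \<not> E a b"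
    proof (intro ballI)
      fix a b assume a: "a \<in> B" and b: "b \<in> A \<union> {v}"
      have "a \<in> V" "b \<in> V" using a b AV v by auto
      then have "E a b = E b a" using sym by blast
      then show "\<not> E a b" using False noe a b by auto
    qed
    moreover have "B \<inter> (A \<union> {v}) = {}" using part AV by auto
    ultimately show ?thesis using part by (intro disconI[of B "A \<union> {v}"]) auto
  next
    case True
    then obtain z where z: "z \<in> B" "E v z" by blast
    show ?thesis
    proof (cases "X = {}")
      case True
      have "A \<union> (B \<union> {v}) = V" using part v by auto
      moreover have "\<forall>a\<in>A. \<forall>b\<in>B \<union> {v}. \<not> E a b"
      proof (intro ballI)
        fix a b assume a: "a \<in> A" and b: "b \<in> B \<union> {v}"
        have "a \<in> V" "b \<in> V" using a b AV v by auto
        then have "E a b = E b a" using sym by blast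
        then show "\<not> E a b" using True noe a b unfolding X_def by auto
      qed
      moreover have "A \<inter> (B \<union> {v}) = {}" using part AV by auto
      ultimately show ?thesis using part u by (intro disconI[of A "B \<union> {v}"]) auto
    next
      case False
      show ?thesis
      proof (cases "\<exists>x\<in>X. \<exists>y\<in>Y. E x y")
        case True
        then obtain x y where xy: "x \<in> X" "y \<in> Y" "E x y" by blast
        have "x \<in> V" "y \<in> V" "z \<in> V" using xy z AV unfolding X_def Y_def by auto
        have f1: "E y x" using xy sym \<open>x \<in> V\<close> \<open>y \<in> V\<close> by blast
        have f2: "E x v" using xy sym \<open>x \<in> V\<close> v unfolding X_def by blast
        have f4: "\<not> E y v" using xy sym \<open>y \<in> V\<close> v unfolding X_def Y_def by blast
        have f5: "\<not> E x z" using xy z noe unfolding X_def by blast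
        have f6: "\<not> E y z" using xy z noe unfolding Y_def by blast
        have "P4 E V" unfolding P4_def using f1 f2 z(2) f4 f5 f6 \<open>x \<in> V\<close> \<open>y \<in> V\<close> \<open>z \<in> V\<close> v by blast
        then show ?thesis using np by blast
      next
        case False
        have "Y \<union> (X \<union> B \<union> {v}) = V" using part v unfolding X_def Y_def by auto
        moreover have "Y \<inter> (X \<union> B \<union> {v}) = {}" using part AV unfolding X_def Y_def by auto
        moreover have "\<forall>a\<in>Y. \<forall>b\<in>X \<union> B \<union> {v}. \<not> E a b"
        proof (intro ballI)
          fix a b assume a: "a \<in> Y" and b: "b \<in> X \<union> B \<union> {v}"
          have aV: "a \<in> V" "a \<in> A" using a AV unfolding Y_def by auto
          show "\<not> E a b"
          proof (cases "b \<in> X")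
            case True
            then have "b \<in> V" using AV unfolding X_def by auto
            then have "E a b = E b a" using sym aV by blast
            then show ?thesis using False a True by blast
          next
            case bX: False
            then have "b \<in> B \<or> b = v" using b by blast
            then have "b \<in> V" using AV v by auto
            then have "E a b = E b a" using sym aV by blast
            then show ?thesis using noe aV a \<open>b \<in> B \<or> b = v\<close> unfolding X_def Y_def by auto
          qed
        qed
        moreover have "Y \<noteq> {}" using uY by auto
        ultimately show ?thesis by (intro disconI[of Y "X \<union> B \<union> {v}"]) auto
      qed
    qed
  qed
qed

lemma core:
  assumes si: "symirr E V" and np: "\<not> P4 E V" and v: "v \<in> V" and d: "discon E (V - {v})"
  shows "discon E V \<or> discon (coE E) V"
proof -
  have sym: "\<forall>x\<in>V. \<forall>y\<in>V. (E x y \<longleftrightarrow> E y x)" using si unfolding symirr_def by blast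
  obtain A B where p: "A \<union> B = V - {v}" "A \<inter> B = {}" "A \<noteq> {}" "B \<noteq> {}" and noe: "\<forall>a\<in>A. \<forall>b\<in>B. \<not> E a b"
    using d unfolding discon_def by blast
  show ?thesis
  proof (cases "\<forall>u\<in>V - {v}. E v u")
    case True
    have "{v} \<union> (V - {v}) = V" using v by auto
    moreover have "\<forall>a\<in>{v}. \<forall>b\<in>V - {v}. \<not> coE E a b" using True unfolding coE_def by blast
    moreover have "V - {v} \<noteq> {}" using p by auto
    ultimately have "discon (coE E) V" by (intro disconI[of "{v}" "V - {v}"]) auto
    then show ?thesis by blast
  next
    case False
    then obtain u where u: "u \<in> A \<union> B" "\<not> E v u" using p by blast
    show ?thesis
    proof (cases "u \<in> A")
      case True
      show ?thesis using core2[OF sym np v p(1,2,4) noe True u(2)] by blast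
    next
      case False
      then have "u \<in> B" using u by blast
      have noe': "\<forall>a\<in>B. \<forall>b\<in>A. \<not> E a b" using noe sym p by blast
      have "B \<union> A = V - {v}" "B \<inter> A = {}" using p by auto
      show ?thesis using core2[OF sym np v \<open>B \<union> A = V - {v}\<close> \<open>B \<inter> A = {}\<close> p(3) noe' \<open>u \<in> B\<close> u(2)] by blast
    qed
  qed
qed

lemma symirr_mono: "symirr E V \<Longrightarrow> W \<subseteq> V \<Longrightarrow> symirr E W"
  unfolding symirr_def by blast

lemma P4_mono: "\<not> P4 E V \<Longrightarrow> W \<subseteq> V \<Longrightarrow> \<not> P4 E W"
  unfolding P4_def by blast

lemma symirr_co: "symirr E V \<Longrightarrow> symirr (coE E) V"
  unfolding symirr_def coE_def by blast

lemma P4_co: assumes "symirr E V" "\<not> P4 E V" shows "\<not> P4 (coE E) V"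
proof
  assume "P4 (coE E) V"
  then obtain a b c d where abcd: "a \<in> V" "b \<in> V" "c \<in> V" "d \<in> V" and
    h: "coE E a b" "coE E b c" "coE E c d" "\<not> coE E a c" "\<not> coE E b d" "\<not> coE E a d"
    unfolding P4_def by blast
  have s: "\<forall>x\<in>V. \<forall>y\<in>V. (E x y \<longleftrightarrow> E y x)" using assms(1) unfolding symirr_def by blast
  have "a \<noteq> d" using h s abcd unfolding coE_def by blast
  have "b \<noteq> d" using h s abcd unfolding coE_def by blast
  have "a \<noteq> c" using h unfolding coE_def by blast
  have "E b d" "E d a" "E a c" "\<not> E b a" "\<not> E d c" "\<not> E b c"
    using h s abcd \<open>a \<noteq> d\<close> \<open>b \<noteq> d\<close> \<open>a \<noteq> c\<close> unfolding coE_def by blast+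
  then have "P4 E V" unfolding P4_def using abcd by blast
  then show False using assms(2) by blast
qed

lemma discon_coco: assumes "discon (coE (coE E)) V" shows "discon E V"
proof -
  obtain A B where p: "A \<union> B = V" "A \<inter> B = {}" "A \<noteq> {}" "B \<noteq> {}" and
    n: "\<forall>a\<in>A. \<forall>b\<in>B. \<not> coE (coE E) a b" using assms unfolding discon_def by blast
  have "\<forall>a\<in>A. \<forall>b\<in>B. \<not> E a b"
  proof (intro ballI)
    fix a b assume "a \<in> A" "b \<in> B"
    then have "a \<noteq> b" "\<not> coE (coE E) a b" using p n by auto
    then show "\<not> E a b" unfolding coE_def by auto
  qed
  then show ?thesis using p by (intro disconI) auto
qed

lemma key:
  assumes "finite V" "card V \<ge> 2" "symirr E V" "\<not> P4 E V"
  shows "discon E V \<or> discon (coE E) V"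
  using assms
proof (induction "card V" arbitrary: V rule: less_induct)
  case less
  show ?case
  proof (cases "card V = 2")
    case True
    then obtain u v where uv: "V = {u, v}" "u \<noteq> v" by (meson card_2_iff)
    show ?thesis
    proof (cases "E u v")
      case True
      have "discon (coE E) V" using True uv
        by (intro disconI[of "{u}" "{v}"]) (auto simp: coE_def)
      then show ?thesis by blast
    next
      case False
      have "discon E V" using False uv
        by (intro disconI[of "{u}" "{v}"]) auto
      then show ?thesis by blast
    qed
  next
    case False
    then have c3: "card V \<ge> 3" using less.prems by linarith
    then obtain v where v: "v \<in> V" by fastforce
    let ?W = "V - {v}"
    have cW: "card ?W \<ge> 2" "card ?W < card V" using c3 v less.prems(1) by auto
    have sW: "symirr E ?W" "\<not> P4 E ?W" using symirr_mono[OF less.prems(3)] P4_mono[OF less.prems(4)] by auto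
    have "discon E ?W \<or> discon (coE E) ?W"
      using less.hyps[OF cW(2) _ cW(1) sW] less.prems(1) by blast
    then show ?thesis
    proof
      assume "discon E ?W" then show ?thesis using core[OF less.prems(3,4) v] by blast
    next
      assume d: "discon (coE E) ?W"
      have "symirr (coE E) V" "\<not> P4 (coE E) V" using symirr_co[OF less.prems(3)] P4_co[OF less.prems(3,4)] by auto
      then have "discon (coE E) V \<or> discon (coE (coE E)) V" using core[OF _ _ v d] by blast
      then show ?thesis using discon_coco by blast
    qed
  qed
qed

lemma P4free_cograph:
  assumes "finite V" "V \<noteq> {}" "symirr E V" "\<not> P4 E V"
  shows "is_cograph V E"
  using assms
proof (induction "card V" arbitrary: V rule: less_induct)
  case less
  show ?case
  proof (cases "card V = 1")
    case True
    then obtain v where V: "V = {v}" using card_1_singletonE by blast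
    have "\<not> E v v" using less.prems(3) V unfolding symirr_def by blast
    then show ?thesis unfolding is_cograph_def V
      by (intro exI[of _ "{v}"] exI[of _ "\<lambda>_ _. False"] exI[of _ id]) (auto intro: built_cograph.single)
  next
    case False
    then have "card V \<ge> 2" using less.prems(1,2) by (metis One_nat_def Suc_1 Suc_leI card_gt_0_iff le_neq_implies_less)
    then have d: "discon E V \<or> discon (coE E) V" using key[OF less.prems(1) _ less.prems(3,4)] by blast
    have sym: "\<forall>x\<in>V. \<forall>y\<in>V. (E x y \<longleftrightarrow> E y x)" using less.prems(3) unfolding symirr_def by blast
    obtain A B where p: "A \<union> B = V" "A \<inter> B = {}" "A \<noteq> {}" "B \<noteq> {}" and
      cr: "(\<forall>a\<in>A. \<forall>b\<in>B. \<not> E a b \<and> \<not> E b a) \<or> (\<forall>a\<in>A. \<forall>b\<in>B. E a b \<and> E b a)"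
    proof -
      from d show ?thesis
      proof
        assume "discon E V"
        then obtain A B where p: "A \<union> B = V" "A \<inter> B = {}" "A \<noteq> {}" "B \<noteq> {}" "\<forall>a\<in>A. \<forall>b\<in>B. \<not> E a b"
          unfolding discon_def by blast
        have "\<forall>a\<in>A. \<forall>b\<in>B. \<not> E a b \<and> \<not> E b a"
        proof (intro ballI)
          fix a b assume ab: "a \<in> A" "b \<in> B"
          then have "\<not> E a b" "a \<in> V" "b \<in> V" using p by auto
          then show "\<not> E a b \<and> \<not> E b a" using sym by blast
        qed
        then show ?thesis using that p by blast
      next
        assume "discon (coE E) V"
        then obtain A B where p: "A \<union> B = V" "A \<inter> B = {}" "A \<noteq> {}" "B \<noteq> {}" "\<forall>a\<in>A. \<forall>b\<in>B. \<not> coE E a b"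
          unfolding discon_def by blast
        have "\<forall>a\<in>A. \<forall>b\<in>B. E a b \<and> E b a"
        proof (intro ballI)
          fix a b assume ab: "a \<in> A" "b \<in> B"
          then have "a \<noteq> b" "\<not> coE E a b" "a \<in> V" "b \<in> V" using p by auto
          then show "E a b \<and> E b a" using sym unfolding coE_def by blast
        qed
        then show ?thesis using that p by blast
      qed
    qed
    have fin: "finite A" "finite B" using p less.prems(1) by auto
    have lt: "card A < card V" "card B < card V"
      using p less.prems(1) by (auto intro!: psubset_card_mono)
    have "A \<subseteq> V" "B \<subseteq> V" using p by auto
    then have "is_cograph A E" "is_cograph B E"
      using less.hyps[OF lt(1) fin(1) p(3)] less.hyps[OF lt(2) fin(2) p(4)]
        symirr_mono[OF less.prems(3)] P4_mono[OF less.prems(4)] by auto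
    then show ?thesis using combine[of A E B] p cr by auto
  qed
qed

theorem cograph_iff:
  assumes "finite V" "V \<noteq> {}" "symirr E V"
  shows "is_cograph V E \<longleftrightarrow> \<not> P4 E V"
  using P4free_cograph cograph_P4free assms by blast



datatype instr = IInc nat nat | IClr nat nat | IJEq nat nat nat nat | ILeft nat | IRight nat
  | IJSym nat nat nat | IGoto nat | IAcc | IRej

type_synonym cconf = "nat \<times> nat \<times> (nat \<Rightarrow> nat)"

definition cstep :: "instr list \<Rightarrow> bool list \<Rightarrow> cconf \<Rightarrow> cconf" where
  "cstep P w c = (case c of (pc, ih, R) \<Rightarrow> if pc < length P then (case P ! pc of
     IInc r p \<Rightarrow> (p, ih, R(r := Suc (R r)))
   | IClr r p \<Rightarrow> (p, ih, R(r := 0))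
   | IJEq r s p1 p2 \<Rightarrow> (if R r = R s then p1 else p2, ih, R)
   | ILeft p \<Rightarrow> (p, ih - 1, R)
   | IRight p \<Rightarrow> (p, min (Suc (length w)) (Suc ih), R)
   | IJSym p0 p1 p2 \<Rightarrow> (if inp_sym w ih = 0 then p0 else if inp_sym w ih = 1 then p1 else p2, ih, R)
   | IGoto p \<Rightarrow> (p, ih, R)
   | IAcc \<Rightarrow> c | IRej \<Rightarrow> c) else c)"

definition Kt :: nat where "Kt = 8"

fun cellf :: "instr \<Rightarrow> nat \<Rightarrow> nat \<Rightarrow> nat \<times> nat" where
  "cellf (IInc r p) c x = (if c = 0 then (0, x) else if bit x r then (1, unset_bit r x) else (0, set_bit r x))"
| "cellf (IClr r p) c x = (c, unset_bit r x)"
| "cellf (IJEq r s p1 p2) c x = (if bit x r = bit x s then c else 1, x)"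
| "cellf _ c x = (c, x)"

fun stopf :: "instr \<Rightarrow> nat \<Rightarrow> bool" where
  "stopf (IInc r p) c = (c = 0)"
| "stopf _ c = True"

fun initc :: "instr \<Rightarrow> nat" where
  "initc (IInc r p) = 1"
| "initc _ = 0"

fun nextpc :: "instr \<Rightarrow> nat \<Rightarrow> nat" where
  "nextpc (IInc r p) c = p"
| "nextpc (IClr r p) c = p"
| "nextpc (IJEq r s p1 p2) c = (if c = 0 then p1 else p2)"
| "nextpc _ c = 0"

fun is_sweep :: "instr \<Rightarrow> bool" where
  "is_sweep (IInc r p) = True"
| "is_sweep (IClr r p) = True"
| "is_sweep (IJEq r s p1 p2) = True"
| "is_sweep _ = False"

definition tgt :: "instr list \<Rightarrow> nat \<Rightarrow> nat" where
  "tgt P p = (if p < length P then 3 + 5 * p else 1)"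

definition fetch :: "instr list \<Rightarrow> nat \<Rightarrow> instr" where
  "fetch P p = (if p < length P then P ! p else IRej)"

definition tdelta :: "instr list \<Rightarrow> nat \<Rightarrow> nat \<Rightarrow> nat \<Rightarrow> nat \<times> nat \<times> int \<times> int" where
  "tdelta P q a s = (
    if q = 2 then (tgt P 0, 1, 0, 0)
    else if q < 2 then (q, s, 0, 0)
    else (let p = (q - 3) div 5; ph = (q - 3) mod 5; ins = fetch P p in
      if ph = 0 then
        (if is_sweep ins then (4 + 5 * p + initc ins, s, 0, 1) else
         (case ins of
           ILeft p' \<Rightarrow> (tgt P p', s, -1, 0)
         | IRight p' \<Rightarrow> (tgt P p', s, 1, 0)
         | IGoto p' \<Rightarrow> (tgt P p', s, 0, 0)
         | IJSym p0 p1 p2 \<Rightarrow> (tgt P (if a = 0 then p0 else if a = 1 then p1 else p2), s, 0, 0)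
         | IAcc \<Rightarrow> (0, s, 0, 0)
         | _ \<Rightarrow> (1, s, 0, 0)))
      else if ph \<le> 2 then
        (if s = 0 \<and> stopf ins (ph - 1) then (6 + 5 * p + (ph - 1), 0, 0, -1)
         else (case cellf ins (ph - 1) (s - 2) of (c', x') \<Rightarrow> (4 + 5 * p + c', 2 + take_bit Kt x', 0, 1)))
      else
        (if s = 1 then (tgt P (nextpc ins (ph - 3)), 1, 0, 0) else (6 + 5 * p + (ph - 3), s, 0, -1))))"

definition tmM :: "instr list \<Rightarrow> tm" where
  "tmM P = \<lparr>nstates = 3 + 5 * length P, nsyms = 2 + 2 ^ Kt, start = 2, acc = 0, rej = 1, delta = tdelta P\<rparr>"

lemma cellf_le: "c \<le> 1 \<Longrightarrow> fst (cellf ins c x) \<le> 1"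
  by (cases ins) auto

lemma delta_range:
  fixes q a s :: nat
  assumes q: "q < 3 + 5 * length P" and s: "s < 2 + 2 ^ Kt"
  shows "case tdelta P q a s of (q', s', di, dw) \<Rightarrow>
       q' < 3 + 5 * length P \<and> s' < 2 + 2 ^ Kt \<and> di \<in> {-1,0,1} \<and> dw \<in> {-1,0,1}"
proof -
  let ?L = "length P"
  have tg: "tgt P p < 3 + 5 * ?L" for p unfolding tgt_def by auto
  obtain q' s' di dw where d: "tdelta P q a s = (q', s', di, dw)" by (metis prod_cases4)
  have "q' < 3 + 5 * ?L \<and> s' < 2 + 2 ^ Kt \<and> di \<in> {-1,0,1} \<and> dw \<in> {-1,0,1}"
  proof (cases "q < 3")
    case True
    then show ?thesis using d s q tg by (auto simp: tdelta_def split: if_splits)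
  next
    case False
    define p where "p = (q - 3) div 5"
    define ph where "ph = (q - 3) mod 5"
    have qe: "q = 3 + 5 * p + ph" unfolding p_def ph_def using False by simp
    have pl: "p < ?L" using q qe by simp
    have ph5: "ph < 5" unfolding ph_def by simp
    have dd: "tdelta P q a s = (let ins = fetch P p in
      if ph = 0 then
        (if is_sweep ins then (4 + 5 * p + initc ins, s, 0, 1) else
         (case ins of
           ILeft p' \<Rightarrow> (tgt P p', s, -1, 0)
         | IRight p' \<Rightarrow> (tgt P p', s, 1, 0)
         | IGoto p' \<Rightarrow> (tgt P p', s, 0, 0)
         | IJSym p0 p1 p2 \<Rightarrow> (tgt P (if a = 0 then p0 else if a = 1 then p1 else p2), s, 0, 0)
         | IAcc \<Rightarrow> (0, s, 0, 0)
         | _ \<Rightarrow> (1, s, 0, 0)))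
      else if ph \<le> 2 then
        (if s = 0 \<and> stopf ins (ph - 1) then (6 + 5 * p + (ph - 1), 0, 0, -1)
         else (case cellf ins (ph - 1) (s - 2) of (c', x') \<Rightarrow> (4 + 5 * p + c', 2 + take_bit Kt x', 0, 1)))
      else
        (if s = 1 then (tgt P (nextpc ins (ph - 3)), 1, 0, 0) else (6 + 5 * p + (ph - 3), s, 0, -1)))"
      using False unfolding tdelta_def p_def ph_def by (simp add: Let_def)
    show ?thesis
    proof (cases "ph = 0")
      case True
      have "initc ins \<le> 1" for ins by (cases ins) auto
      then show ?thesis using d dd True pl s tg
        by (cases "fetch P p") (auto simp: Let_def)
    next
      case ph0: False
      show ?thesis
      proof (cases "ph \<le> 2")
        case True
        obtain c' x' where cx: "cellf (fetch P p) (ph - 1) (s - 2) = (c', x')" by fastforce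
        have "c' \<le> 1" using cellf_le[of "ph - 1" "fetch P p" "s - 2"] cx True by simp
        moreover have "take_bit Kt x' < 2 ^ Kt" by simp
        ultimately show ?thesis using d dd True ph0 pl s cx
          by (auto simp: Let_def split: if_splits)
      next
        case False
        then show ?thesis using d dd ph0 pl s tg ph5
          by (auto simp: Let_def split: if_splits)
      qed
    qed
  qed
  then show ?thesis using d by simp
qed

lemma wf_tmM: "wf_tm (tmM P)"
  unfolding wf_tm_def using delta_range[of _ P] by (auto simp: tmM_def)

definition treach :: "tm \<Rightarrow> bool list \<Rightarrow> (nat \<Rightarrow> bool) \<Rightarrow> conf \<Rightarrow> conf \<Rightarrow> bool" where
  "treach M w S c c' \<longleftrightarrow> (\<exists>k. (step M w ^^ k) c = c' \<and> (\<forall>j\<le>k. S (work_head ((step M w ^^ j) c))))"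

lemma treach_refl: "S (work_head c) \<Longrightarrow> treach M w S c c"
  unfolding treach_def by (intro exI[of _ 0]) auto

lemma treach_step: assumes "S (work_head c)" "treach M w S (step M w c) c'" shows "treach M w S c c'"
proof -
  obtain k where k: "(step M w ^^ k) (step M w c) = c'" "\<forall>j\<le>k. S (work_head ((step M w ^^ j) (step M w c)))"
    using assms(2) unfolding treach_def by blast
  have e: "(step M w ^^ Suc j) c = (step M w ^^ j) (step M w c)" for j by (simp only: funpow_Suc_right comp_apply)
  show ?thesis unfolding treach_def
  proof (intro exI[of _ "Suc k"] conjI allI impI)
    show "(step M w ^^ Suc k) c = c'" using k e by simp
    fix j assume "j \<le> Suc k"
    then show "S (work_head ((step M w ^^ j) c))"
      using assms(1) k(2) e by (cases j) auto
  qed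
qed

lemma treach_step_eq: "step M w c = c1 \<Longrightarrow> S (work_head c) \<Longrightarrow> treach M w S c1 c' \<Longrightarrow> treach M w S c c'"
  using treach_step by metis

lemma treach_trans: assumes "treach M w S c1 c2" "treach M w S c2 c3" shows "treach M w S c1 c3"
proof -
  obtain k1 where k1: "(step M w ^^ k1) c1 = c2" "\<forall>j\<le>k1. S (work_head ((step M w ^^ j) c1))"
    using assms(1) unfolding treach_def by blast
  obtain k2 where k2: "(step M w ^^ k2) c2 = c3" "\<forall>j\<le>k2. S (work_head ((step M w ^^ j) c2))"
    using assms(2) unfolding treach_def by blast
  have e: "(step M w ^^ (j + k1)) c1 = (step M w ^^ j) c2" for j using k1(1) by (simp add: funpow_add)
  show ?thesis unfolding treach_def
  proof (intro exI[of _ "k2 + k1"] conjI allI impI)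
    show "(step M w ^^ (k2 + k1)) c1 = c3" using e k2 by simp
    fix j assume j: "j \<le> k2 + k1"
    show "S (work_head ((step M w ^^ j) c1))"
    proof (cases "j \<le> k1")
      case True then show ?thesis using k1 by simp
    next
      case False
      then obtain j' where "j = j' + k1" "j' \<le> k2" using j by (metis add.commute le_add_diff_inverse nat_le_linear add_le_cancel_left)
      then show ?thesis using e k2 by simp
    qed
  qed
qed

definition st :: "nat \<Rightarrow> nat \<Rightarrow> nat" where "st p k = 3 + 5 * p + k"

lemma tdelta_st:
  assumes "k < 5"
  shows "tdelta P (st p k) a s = (let ins = fetch P p in
      if k = 0 then
        (if is_sweep ins then (st p (Suc (initc ins)), s, 0, 1) else
         (case ins of
           ILeft p' \<Rightarrow> (tgt P p', s, -1, 0)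
         | IRight p' \<Rightarrow> (tgt P p', s, 1, 0)
         | IGoto p' \<Rightarrow> (tgt P p', s, 0, 0)
         | IJSym p0 p1 p2 \<Rightarrow> (tgt P (if a = 0 then p0 else if a = 1 then p1 else p2), s, 0, 0)
         | IAcc \<Rightarrow> (0, s, 0, 0)
         | _ \<Rightarrow> (1, s, 0, 0)))
      else if k \<le> 2 then
        (if s = 0 \<and> stopf ins (k - 1) then (st p (3 + (k - 1)), 0, 0, -1)
         else (case cellf ins (k - 1) (s - 2) of (c', x') \<Rightarrow> (st p (Suc c'), 2 + take_bit Kt x', 0, 1)))
      else
        (if s = 1 then (tgt P (nextpc ins (k - 3)), 1, 0, 0) else (st p (3 + (k - 3)), s, 0, -1)))"
proof -
  have d: "(5 * p + k) div 5 = p" "(5 * p + k) mod 5 = k" using assms by auto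
  show ?thesis unfolding tdelta_def st_def using d by (simp add: Let_def add.assoc)
qed

lemma step_gen:
  assumes "q \<noteq> 0" "q \<noteq> 1"
  shows "step (tmM P) w (q, ih, wh, tp) = (case tdelta P q (inp_sym w ih) (tp wh) of (q', s', di, dw) \<Rightarrow>
     (q', nat (min (int (length w) + 1) (max 0 (int ih + di))), nat (max 0 (int wh + dw)), tp(wh := s')))"
  using assms unfolding step_def by (simp add: tmM_def)

definition mk_tape :: "nat list \<Rightarrow> nat \<Rightarrow> nat" where
  "mk_tape cs i = (if i = 0 then 1 else if i \<le> length cs then 2 + cs ! (i - 1) else 0)"

fun swp :: "instr \<Rightarrow> nat \<Rightarrow> nat list \<Rightarrow> nat \<times> nat list" where
  "swp ins c [] = (if stopf ins c then (c, []) else (fst (cellf ins c 0), [take_bit Kt (snd (cellf ins c 0))]))"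
| "swp ins c (x # xs) = (let r = swp ins (fst (cellf ins c x)) xs in (fst r, take_bit Kt (snd (cellf ins c x)) # snd r))"

lemma ext_once: "\<not> stopf ins c \<Longrightarrow> stopf ins (fst (cellf ins c 0))"
  by (cases ins) auto

lemma mk_tape_at: "mk_tape (dn @ x # rest) (Suc (length dn)) = 2 + x"
  unfolding mk_tape_def by (simp add: nth_append)

lemma mk_tape_end: "mk_tape cs (Suc (length cs)) = 0"
  unfolding mk_tape_def by simp

lemma mk_tape_upd: "(mk_tape (dn @ x # rest))(Suc (length dn) := 2 + y) = mk_tape ((dn @ [y]) @ rest)"
  unfolding mk_tape_def by (auto simp: fun_eq_iff nth_append nth_Cons' split: if_splits)

lemma mk_tape_upd_end: "(mk_tape cs)(Suc (length cs) := 2 + y) = mk_tape (cs @ [y])"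
  unfolding mk_tape_def by (auto simp: fun_eq_iff nth_append)

lemma mk_tape_upd_end0: "(mk_tape cs)(Suc (length cs) := 0) = mk_tape cs"
  unfolding mk_tape_def by (auto simp: fun_eq_iff)

lemma mk_tape_upd_same: "(mk_tape cs)(j := mk_tape cs j) = mk_tape cs"
  by simp

lemma mk_tape_pos: "1 \<le> j \<Longrightarrow> j \<le> length cs \<Longrightarrow> mk_tape cs j \<ge> 2"
  unfolding mk_tape_def by simp

lemma fetch_eq: "p < length P \<Longrightarrow> fetch P p = P ! p"
  unfolding fetch_def by simp

lemma st_ne: "st p k \<noteq> 0" "st p k \<noteq> 1"
  unfolding st_def by auto

lemma step_rs_stop:
  assumes "p < length P" "P ! p = ins" "c \<le> 1" "tp j = 0" "stopf ins c" "ih \<le> Suc (length w)"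
  shows "step (tmM P) w (st p (Suc c), ih, j, tp) = (st p (3 + c), ih, j - 1, tp(j := 0))"
proof -
  have k5: "Suc c < 5" using assms by auto
  have fe: "fetch P p = ins" using assms fetch_eq by simp
  show ?thesis
    apply (simp only: step_gen[OF st_ne])
    apply (subst tdelta_st[OF k5])
    apply (simp only: Let_def fe assms(4))
    using assms by simp
qed

lemma step_rs_write:
  assumes "p < length P" "P ! p = ins" "c \<le> 1" "\<not> (tp j = 0 \<and> stopf ins c)" "ih \<le> Suc (length w)"
    "cellf ins c (tp j - 2) = (c', x')"
  shows "step (tmM P) w (st p (Suc c), ih, j, tp) = (st p (Suc c'), ih, Suc j, tp(j := 2 + take_bit Kt x'))"
proof -
  have k5: "Suc c < 5" using assms by auto
  have fe: "fetch P p = ins" using assms fetch_eq by simp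
  show ?thesis
    apply (simp only: step_gen[OF st_ne])
    apply (subst tdelta_st[OF k5])
    apply (simp only: Let_def fe)
    using assms by (auto simp: nat_add_distrib)
qed

lemma step_ls_marker:
  assumes "p < length P" "P ! p = ins" "c \<le> 1" "tp j = 1" "ih \<le> Suc (length w)"
  shows "step (tmM P) w (st p (3 + c), ih, j, tp) = (tgt P (nextpc ins c), ih, j, tp)"
proof -
  have k5: "3 + c < 5" using assms by auto
  have fe: "fetch P p = ins" using assms fetch_eq by simp
  show ?thesis
    apply (simp only: step_gen[OF st_ne])
    apply (subst tdelta_st[OF k5])
    apply (simp only: Let_def fe)
    using assms by auto
qed

lemma step_ls_move:
  assumes "p < length P" "P ! p = ins" "c \<le> 1" "tp j \<noteq> 1" "ih \<le> Suc (length w)"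
  shows "step (tmM P) w (st p (3 + c), ih, j, tp) = (st p (3 + c), ih, j - 1, tp)"
proof -
  have k5: "3 + c < 5" using assms by auto
  have fe: "fetch P p = ins" using assms fetch_eq by simp
  show ?thesis
    apply (simp only: step_gen[OF st_ne])
    apply (subst tdelta_st[OF k5])
    apply (simp only: Let_def fe)
    using assms by auto
qed

lemma step_disp:
  assumes "p < length P" "P ! p = ins" "ih \<le> Suc (length w)"
  shows "step (tmM P) w (st p 0, ih, j, tp) = (if is_sweep ins then (st p (Suc (initc ins)), ih, Suc j, tp) else
    (case ins of
       ILeft p' \<Rightarrow> (tgt P p', ih - 1, j, tp)
     | IRight p' \<Rightarrow> (tgt P p', min (Suc (length w)) (Suc ih), j, tp)
     | IGoto p' \<Rightarrow> (tgt P p', ih, j, tp)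
     | IJSym p0 p1 p2 \<Rightarrow> (tgt P (if inp_sym w ih = 0 then p0 else if inp_sym w ih = 1 then p1 else p2), ih, j, tp)
     | IAcc \<Rightarrow> (0, ih, j, tp)
     | _ \<Rightarrow> (1, ih, j, tp)))"
proof -
  have k5: "0 < (5::nat)" by simp
  have fe: "fetch P p = ins" using assms fetch_eq by simp
  show ?thesis
    apply (simp only: step_gen[OF st_ne])
    apply (subst tdelta_st[OF k5])
    apply (simp only: Let_def fe)
    using assms by (cases ins) (auto simp: nat_diff_distrib')
qed


lemma rsweep:
  assumes p: "p < length P" "P ! p = ins" and ih: "ih \<le> Suc (length w)"
  shows "c \<le> 1 \<Longrightarrow> (\<forall>h \<le> length dn + length (snd (swp ins c rest)) + 1. S h) \<Longrightarrow>
    treach (tmM P) w S (st p (Suc c), ih, Suc (length dn), mk_tape (dn @ rest))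
      (st p (3 + fst (swp ins c rest)), ih, length dn + length (snd (swp ins c rest)), mk_tape (dn @ snd (swp ins c rest)))"
proof (induction rest arbitrary: dn c)
  case Nil
  have tb: "mk_tape dn (Suc (length dn)) = 0" by (rule mk_tape_end)
  show ?case
  proof (cases "stopf ins c")
    case True
    have "step (tmM P) w (st p (Suc c), ih, Suc (length dn), mk_tape dn) = (st p (3 + c), ih, length dn, mk_tape dn)"
      using step_rs_stop[where tp="mk_tape dn" and j="Suc (length dn)", OF p Nil.prems(1) tb True ih] unfolding mk_tape_upd_end0 by simp
    note stp = this
    have sw0: "swp ins c [] = (c, [])" using True by simp
    have h: "S (Suc (length dn))" "S (length dn)" using Nil.prems(2) sw0 by auto
    have "treach (tmM P) w S (st p (Suc c), ih, Suc (length dn), mk_tape dn) (st p (3 + c), ih, length dn, mk_tape dn)"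
      by (rule treach_step) (use stp h in \<open>auto intro: treach_refl simp: work_head_def\<close>)
    then show ?thesis using sw0 by simp
  next
    case False
    obtain c' x' where cx: "cellf ins c 0 = (c', x')" by fastforce
    have sc': "stopf ins c'" using ext_once[OF False] cx by simp
    have c'1: "c' \<le> 1" using cellf_le[OF Nil.prems(1), of ins 0] cx by simp
    have s1: "step (tmM P) w (st p (Suc c), ih, Suc (length dn), mk_tape dn) =
       (st p (Suc c'), ih, Suc (Suc (length dn)), mk_tape (dn @ [take_bit Kt x']))"
      using step_rs_write[OF p Nil.prems(1) _ ih, of "mk_tape dn" "Suc (length dn)" c' x'] False cx tb
      unfolding mk_tape_upd_end by simp
    have tb2: "mk_tape (dn @ [take_bit Kt x']) (Suc (Suc (length dn))) = 0"
      using mk_tape_end[of "dn @ [take_bit Kt x']"] by simp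
    have e0: "(mk_tape (dn @ [take_bit Kt x']))(Suc (Suc (length dn)) := 0) = mk_tape (dn @ [take_bit Kt x'])"
      using mk_tape_upd_end0[of "dn @ [take_bit Kt x']"] by simp
    have s2: "step (tmM P) w (st p (Suc c'), ih, Suc (Suc (length dn)), mk_tape (dn @ [take_bit Kt x'])) =
       (st p (3 + c'), ih, Suc (length dn), mk_tape (dn @ [take_bit Kt x']))"
      using step_rs_stop[where tp="mk_tape (dn @ [take_bit Kt x'])" and j="Suc (Suc (length dn))", OF p c'1 tb2 sc' ih] unfolding e0 by simp
    have sw: "swp ins c [] = (c', [take_bit Kt x'])" using False cx by simp
    have h: "S (Suc (length dn))" "S (Suc (Suc (length dn)))" using Nil.prems(2) sw by auto
    have "treach (tmM P) w S (st p (Suc c'), ih, Suc (Suc (length dn)), mk_tape (dn @ [take_bit Kt x']))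
       (st p (3 + c'), ih, Suc (length dn), mk_tape (dn @ [take_bit Kt x']))"
      by (rule treach_step) (use s2 h in \<open>auto intro: treach_refl simp: work_head_def\<close>)
    note tmp = this
    have "treach (tmM P) w S (st p (Suc c), ih, Suc (length dn), mk_tape dn)
       (st p (3 + c'), ih, Suc (length dn), mk_tape (dn @ [take_bit Kt x']))"
      by (rule treach_step_eq[OF s1 _ tmp]) (use h in \<open>auto simp: work_head_def\<close>)
    then show ?thesis unfolding sw by simp
  qed
next
  case (Cons x xs)
  obtain c' x'' where cx: "cellf ins c x = (c', x'')" by fastforce
  have c'1: "c' \<le> 1" using cellf_le[OF Cons.prems(1), of ins x] cx by simp
  have at: "mk_tape (dn @ x # xs) (Suc (length dn)) = 2 + x" by (rule mk_tape_at)
  have s1: "step (tmM P) w (st p (Suc c), ih, Suc (length dn), mk_tape (dn @ x # xs)) =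
     (st p (Suc c'), ih, Suc (length (dn @ [take_bit Kt x''])), mk_tape ((dn @ [take_bit Kt x'']) @ xs))"
    using step_rs_write[OF p Cons.prems(1) _ ih, of "mk_tape (dn @ x # xs)" "Suc (length dn)" c' x''] cx at
    unfolding mk_tape_upd by simp
  have sw: "swp ins c (x # xs) = (fst (swp ins c' xs), take_bit Kt x'' # snd (swp ins c' xs))"
    using cx by (simp add: Let_def)
  have IH: "treach (tmM P) w S (st p (Suc c'), ih, Suc (length (dn @ [take_bit Kt x''])), mk_tape ((dn @ [take_bit Kt x'']) @ xs))
      (st p (3 + fst (swp ins c' xs)), ih, length (dn @ [take_bit Kt x'']) + length (snd (swp ins c' xs)),
       mk_tape ((dn @ [take_bit Kt x'']) @ snd (swp ins c' xs)))"
  proof (rule Cons.IH[of c' "dn @ [take_bit Kt x'']", OF c'1])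
    show "\<forall>h\<le>length (dn @ [take_bit Kt x'']) + length (snd (swp ins c' xs)) + 1. S h"
      using Cons.prems(2) sw by simp
  qed
  have h: "S (Suc (length dn))" using Cons.prems(2) sw by auto
  have "treach (tmM P) w S (st p (Suc c), ih, Suc (length dn), mk_tape (dn @ x # xs))
      (st p (3 + fst (swp ins c' xs)), ih, length (dn @ [take_bit Kt x'']) + length (snd (swp ins c' xs)),
       mk_tape ((dn @ [take_bit Kt x'']) @ snd (swp ins c' xs)))"
    by (rule treach_step_eq[OF s1 _ IH]) (use h in \<open>auto simp: work_head_def\<close>)
  then show ?case unfolding sw by simp
qed

lemma lsweep:
  assumes p: "p < length P" "P ! p = ins" and ih: "ih \<le> Suc (length w)" and c: "c \<le> 1"
  shows "j \<le> length cs \<Longrightarrow> (\<forall>h \<le> j. S h) \<Longrightarrow>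
    treach (tmM P) w S (st p (3 + c), ih, j, mk_tape cs) (tgt P (nextpc ins c), ih, 0, mk_tape cs)"
proof (induction j)
  case 0
  have "mk_tape cs 0 = 1" unfolding mk_tape_def by simp
  then have "step (tmM P) w (st p (3 + c), ih, 0, mk_tape cs) = (tgt P (nextpc ins c), ih, 0, mk_tape cs)"
    using step_ls_marker[OF p c _ ih] by simp
  then show ?case using 0 by (intro treach_step[where c="(st p (3 + c), ih, 0, mk_tape cs)"]) (auto intro: treach_refl simp: work_head_def)
next
  case (Suc j)
  have "mk_tape cs (Suc j) \<ge> 2" using mk_tape_pos Suc.prems by simp
  then have "step (tmM P) w (st p (3 + c), ih, Suc j, mk_tape cs) = (st p (3 + c), ih, j, mk_tape cs)"
    using step_ls_move[OF p c _ ih] by simp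
  then show ?case using Suc by (intro treach_step[where c="(st p (3 + c), ih, Suc j, mk_tape cs)"]) (auto simp: work_head_def)
qed

lemma sweep_instr:
  assumes p: "p < length P" "P ! p = ins" "is_sweep ins" and ih: "ih \<le> Suc (length w)"
    and sp: "\<forall>h \<le> length (snd (swp ins (initc ins) cs)) + 1. S h"
  shows "treach (tmM P) w S (st p 0, ih, 0, mk_tape cs)
     (tgt P (nextpc ins (fst (swp ins (initc ins) cs))), ih, 0, mk_tape (snd (swp ins (initc ins) cs)))"
proof -
  have i1: "initc ins \<le> 1" by (cases ins) auto
  have s0: "step (tmM P) w (st p 0, ih, 0, mk_tape cs) = (st p (Suc (initc ins)), ih, Suc 0, mk_tape cs)"
    using step_disp[OF p(1,2) ih] p(3) by simp
  have r: "treach (tmM P) w S (st p (Suc (initc ins)), ih, Suc (length ([]::nat list)), mk_tape ([] @ cs))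
      (st p (3 + fst (swp ins (initc ins) cs)), ih, length ([]::nat list) + length (snd (swp ins (initc ins) cs)),
       mk_tape ([] @ snd (swp ins (initc ins) cs)))"
    using rsweep[OF p(1,2) ih i1, of "[]" cs S] sp by simp
  have cf: "fst (swp ins (initc ins) cs) \<le> 1"
  proof -
    have "c \<le> 1 \<Longrightarrow> fst (swp ins c xs) \<le> 1" for c xs
    proof (induction xs arbitrary: c)
      case Nil then show ?case using cellf_le[OF Nil] by simp
    next
      case (Cons x xs) then show ?case using cellf_le[OF Cons.prems] by (simp add: Let_def)
    qed
    then show ?thesis using i1 by simp
  qed
  have l: "treach (tmM P) w S (st p (3 + fst (swp ins (initc ins) cs)), ih, length (snd (swp ins (initc ins) cs)),
       mk_tape (snd (swp ins (initc ins) cs)))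
     (tgt P (nextpc ins (fst (swp ins (initc ins) cs))), ih, 0, mk_tape (snd (swp ins (initc ins) cs)))"
    using lsweep[OF p(1,2) ih cf] sp by simp
  have "S 0" using sp by simp
  have "treach (tmM P) w S (st p 0, ih, 0, mk_tape cs) (st p (3 + fst (swp ins (initc ins) cs)), ih, length (snd (swp ins (initc ins) cs)),
       mk_tape (snd (swp ins (initc ins) cs)))"
    by (rule treach_step) (use s0 r \<open>S 0\<close> in \<open>auto simp: work_head_def\<close>)
  then show ?thesis using l by (rule treach_trans)
qed


fun vl :: "nat \<Rightarrow> nat list \<Rightarrow> nat" where
  "vl r [] = 0"
| "vl r (x # xs) = (if bit x r then 1 else 0) + 2 * vl r xs"

lemma vl_map_tb: "r < Kt \<Longrightarrow> vl r (map (take_bit Kt) cs) = vl r cs"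
  by (induction cs) (auto simp: bit_take_bit_iff)

lemma swp_inc0: "swp (IInc r p) 0 cs = (0, map (take_bit Kt) cs)"
  by (induction cs) (auto simp: Let_def)

lemma swp_inc1:
  assumes "r < Kt"
  shows "vl r (snd (swp (IInc r p) 1 cs)) = Suc (vl r cs) \<and>
    (\<forall>r'. r' < Kt \<longrightarrow> r' \<noteq> r \<longrightarrow> vl r' (snd (swp (IInc r p) 1 cs)) = vl r' cs) \<and>
    (length (snd (swp (IInc r p) 1 cs)) = length cs \<or>
     (length (snd (swp (IInc r p) 1 cs)) = Suc (length cs) \<and> Suc (vl r cs) = 2 ^ length cs))"
proof (induction cs)
  case Nil
  then show ?case using assms by (auto simp: bit_take_bit_iff bit_set_bit_iff bit_exp_iff)
next
  case (Cons x xs)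
  show ?case
  proof (cases "bit x r")
    case True
    then have sw: "swp (IInc r p) 1 (x # xs) = (fst (swp (IInc r p) 1 xs), take_bit Kt (unset_bit r x) # snd (swp (IInc r p) 1 xs))"
      by (simp add: Let_def)
    show ?thesis unfolding sw using Cons True assms by (auto simp: bit_take_bit_iff bit_unset_bit_iff)
  next
    case False
    then have sw: "swp (IInc r p) 1 (x # xs) = (0, take_bit Kt (set_bit r x) # map (take_bit Kt) xs)"
      by (simp add: Let_def swp_inc0)
    have "vl r' (map (take_bit Kt) xs) = vl r' xs" if "r' < Kt" for r' using vl_map_tb that by blast
    then show ?thesis unfolding sw using False assms by (auto simp: bit_take_bit_iff bit_set_bit_iff)
  qed
qed

lemma swp_clr: "swp (IClr r p) c cs = (c, map (\<lambda>x. take_bit Kt (unset_bit r x)) cs)"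
  by (induction cs) (auto simp: Let_def)

lemma vl_clr: "vl r (map (\<lambda>x. take_bit Kt (unset_bit r x)) cs) = 0"
  by (induction cs) (auto simp: bit_take_bit_iff bit_unset_bit_iff)

lemma vl_clr_other: "r' < Kt \<Longrightarrow> r' \<noteq> r \<Longrightarrow> vl r' (map (\<lambda>x. take_bit Kt (unset_bit r x)) cs) = vl r' cs"
  by (induction cs) (auto simp: bit_take_bit_iff bit_unset_bit_iff)

lemma swp_jeq: "c \<le> 1 \<Longrightarrow> swp (IJEq r s p1 p2) c cs = (if c = 0 \<and> (\<forall>x\<in>set cs. bit x r = bit x s) then 0 else 1, map (take_bit Kt) cs)"
  by (induction cs arbitrary: c) (auto simp: Let_def)

lemma vl_eq_iff: "vl r cs = vl s cs \<longleftrightarrow> (\<forall>x\<in>set cs. bit x r = bit x s)"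
proof (induction cs)
  case (Cons x xs)
  have "((if bit x r then 1 else 0) + 2 * vl r xs = (if bit x s then 1 else 0) + 2 * vl s xs) \<longleftrightarrow>
    (bit x r = bit x s \<and> vl r xs = vl s xs)" by (cases "bit x r"; cases "bit x s") presburger+
  then show ?case using Cons by simp
qed simp

lemma vl_less: "vl r cs < 2 ^ length cs"
  by (induction cs) auto

definition cB :: "instr list \<Rightarrow> bool list \<Rightarrow> cconf \<Rightarrow> bool" where
  "cB P w c = (case c of (pc, ih, R) \<Rightarrow> pc < length P \<and> ih \<le> Suc (length w) \<and> (\<forall>r. R r \<le> Suc (length w)))"

definition Sp :: "bool list \<Rightarrow> nat \<Rightarrow> bool" where
  "Sp w h \<longleftrightarrow> 2 ^ (h - 2) \<le> Suc (length w)"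

definition winv :: "bool list \<Rightarrow> nat list \<Rightarrow> bool" where
  "winv w cs \<longleftrightarrow> length cs = 0 \<or> 2 ^ (length cs - 1) \<le> Suc (length w)"

definition tmrel :: "bool list \<Rightarrow> cconf \<Rightarrow> conf \<Rightarrow> bool" where
  "tmrel w c tc = (case c of (pc, ih, R) \<Rightarrow> \<exists>cs. tc = (st pc 0, ih, 0, mk_tape cs) \<and> (\<forall>r<Kt. vl r cs = R r) \<and> winv w cs)"

fun instr_ok :: "instr \<Rightarrow> bool" where
  "instr_ok (IInc r p) = (r < Kt)"
| "instr_ok (IClr r p) = (r < Kt)"
| "instr_ok (IJEq r s p1 p2) = (r < Kt \<and> s < Kt)"
| "instr_ok _ = True"

definition prog_ok :: "instr list \<Rightarrow> bool" where
  "prog_ok P \<longleftrightarrow> (\<forall>i\<in>set P. instr_ok i)"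

lemma Sp_le: "winv w cs \<Longrightarrow> h \<le> length cs + 1 \<Longrightarrow> Sp w h"
proof -
  assume a: "winv w cs" "h \<le> length cs + 1"
  show "Sp w h"
  proof (cases "length cs = 0")
    case True then show ?thesis using a unfolding Sp_def by auto
  next
    case False
    then have "2 ^ (length cs - 1) \<le> Suc (length w)" using a unfolding winv_def by auto
    moreover have "(2::nat) ^ (h - 2) \<le> 2 ^ (length cs - 1)" using a(2) by (intro power_increasing) auto
    ultimately show ?thesis unfolding Sp_def by linarith
  qed
qed

lemma Sp0: "Sp w 0" unfolding Sp_def by simp

lemma tgt_st: "p < length P \<Longrightarrow> tgt P p = st p 0"
  unfolding tgt_def st_def by simp

lemma sim_step:
  assumes cb: "cB P w c" "cB P w (cstep P w c)" and rel: "tmrel w c tc" and ok: "prog_ok P"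
  shows "\<exists>tc'. treach (tmM P) w (Sp w) tc tc' \<and> tmrel w (cstep P w c) tc'"
proof -
  obtain pc ih R where c: "c = (pc, ih, R)" by (metis prod_cases3)
  obtain cs where tc: "tc = (st pc 0, ih, 0, mk_tape cs)" and vr: "\<forall>r<Kt. vl r cs = R r" and wi: "winv w cs"
    using rel unfolding tmrel_def c by auto
  have pc: "pc < length P" and ih: "ih \<le> Suc (length w)" and Rb: "\<forall>r. R r \<le> Suc (length w)"
    using cb(1) unfolding cB_def c by auto
  define ins where "ins = P ! pc"
  have pi: "P ! pc = ins" unfolding ins_def ..
  have iok: "instr_ok ins" using ok pc unfolding prog_ok_def ins_def by simp
  have cs_eq: "cstep P w c = (case ins of
     IInc r p \<Rightarrow> (p, ih, R(r := Suc (R r)))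
   | IClr r p \<Rightarrow> (p, ih, R(r := 0))
   | IJEq r s p1 p2 \<Rightarrow> (if R r = R s then p1 else p2, ih, R)
   | ILeft p \<Rightarrow> (p, ih - 1, R)
   | IRight p \<Rightarrow> (p, min (Suc (length w)) (Suc ih), R)
   | IJSym p0 p1 p2 \<Rightarrow> (if inp_sym w ih = 0 then p0 else if inp_sym w ih = 1 then p1 else p2, ih, R)
   | IGoto p \<Rightarrow> (p, ih, R)
   | IAcc \<Rightarrow> c | IRej \<Rightarrow> c)"
    unfolding cstep_def c using pc ins_def by simp
  have sd: "step (tmM P) w (st pc 0, ih, 0, mk_tape cs) = (if is_sweep ins then (st pc (Suc (initc ins)), ih, Suc 0, mk_tape cs) else
    (case ins of
       ILeft p' \<Rightarrow> (tgt P p', ih - 1, 0, mk_tape cs)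
     | IRight p' \<Rightarrow> (tgt P p', min (Suc (length w)) (Suc ih), 0, mk_tape cs)
     | IGoto p' \<Rightarrow> (tgt P p', ih, 0, mk_tape cs)
     | IJSym p0 p1 p2 \<Rightarrow> (tgt P (if inp_sym w ih = 0 then p0 else if inp_sym w ih = 1 then p1 else p2), ih, 0, mk_tape cs)
     | IAcc \<Rightarrow> (0, ih, 0, mk_tape cs)
     | _ \<Rightarrow> (1, ih, 0, mk_tape cs)))"
    using step_disp[OF pc pi ih] by simp
  have one: "treach (tmM P) w (Sp w) tc tc'" if "step (tmM P) w tc = tc'" "work_head tc' = 0" for tc'
  proof (rule treach_step_eq[OF that(1)])
    show "Sp w (work_head tc)" using tc Sp0 by (simp add: work_head_def)
    show "treach (tmM P) w (Sp w) tc' tc'" using that(2) Sp0 by (intro treach_refl) simp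
  qed
  have cb2: "cB P w (cstep P w c)" by (rule cb(2))
  show ?thesis
  proof (cases ins)
    case (IInc r p)
    have r: "r < Kt" using iok IInc by simp
    define cs' where "cs' = snd (swp (IInc r p) 1 cs)"
    have pl: "p < length P" and b: "Suc (R r) \<le> Suc (length w)"
      using cb2 unfolding cs_eq IInc cB_def by (auto dest: spec[of _ r])
    have ii: "vl r cs' = Suc (vl r cs)" "\<forall>r'. r' < Kt \<longrightarrow> r' \<noteq> r \<longrightarrow> vl r' cs' = vl r' cs"
      "length cs' = length cs \<or> (length cs' = Suc (length cs) \<and> Suc (vl r cs) = 2 ^ length cs)"
      using swp_inc1[OF r, of p cs] unfolding cs'_def by auto
    have wi': "winv w cs'"
      using ii(3) wi b vr r unfolding winv_def by auto
    have tr: "treach (tmM P) w (Sp w) tc (tgt P (nextpc ins (fst (swp ins (initc ins) cs))), ih, 0, mk_tape (snd (swp ins (initc ins) cs)))"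
      unfolding tc using sweep_instr[where cs=cs and S="Sp w", OF pc pi _ ih] IInc Sp_le[OF wi'] unfolding cs'_def by simp
    have "tmrel w (cstep P w c) (tgt P (nextpc ins (fst (swp ins (initc ins) cs))), ih, 0, mk_tape (snd (swp ins (initc ins) cs)))"
      unfolding cs_eq tmrel_def using IInc pl tgt_st ii vr wi' unfolding cs'_def by auto
    then show ?thesis using tr by blast
  next
    case (IClr r p)
    have r: "r < Kt" using iok IClr by simp
    define cs' where "cs' = map (\<lambda>x. take_bit Kt (unset_bit r x)) cs"
    have pl: "p < length P" using cb2 unfolding cs_eq IClr cB_def by auto
    have wi': "winv w cs'" using wi unfolding winv_def cs'_def by simp
    have tr: "treach (tmM P) w (Sp w) tc (tgt P (nextpc ins (fst (swp ins (initc ins) cs))), ih, 0, mk_tape (snd (swp ins (initc ins) cs)))"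
      unfolding tc using sweep_instr[where cs=cs and S="Sp w", OF pc pi _ ih] IClr Sp_le[OF wi'] unfolding cs'_def by (simp add: swp_clr)
    have "tmrel w (cstep P w c) (tgt P (nextpc ins (fst (swp ins (initc ins) cs))), ih, 0, mk_tape (snd (swp ins (initc ins) cs)))"
      unfolding cs_eq tmrel_def using IClr pl tgt_st vr wi' vl_clr vl_clr_other unfolding cs'_def by (auto simp: swp_clr)
    then show ?thesis using tr by blast
  next
    case (IJEq r s p1 p2)
    have r: "r < Kt" "s < Kt" using iok IJEq by auto
    have pl: "(if R r = R s then p1 else p2) < length P" using cb2 unfolding cs_eq IJEq cB_def by auto
    have wi': "winv w (map (take_bit Kt) cs)" using wi unfolding winv_def by simp
    have sw: "swp ins (initc ins) cs = (if vl r cs = vl s cs then 0 else 1, map (take_bit Kt) cs)"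
      using swp_jeq[of 0 r s p1 p2 cs] IJEq vl_eq_iff by simp
    have tr: "treach (tmM P) w (Sp w) tc (tgt P (nextpc ins (fst (swp ins (initc ins) cs))), ih, 0, mk_tape (snd (swp ins (initc ins) cs)))"
      unfolding tc using sweep_instr[where cs=cs and S="Sp w", OF pc pi _ ih] IJEq Sp_le[OF wi'] sw by simp
    have "tmrel w (cstep P w c) (tgt P (nextpc ins (fst (swp ins (initc ins) cs))), ih, 0, mk_tape (snd (swp ins (initc ins) cs)))"
      unfolding cs_eq tmrel_def sw using IJEq pl tgt_st vr wi' vl_map_tb r by auto
    then show ?thesis using tr by blast
  next
    case (ILeft p)
    have pl: "p < length P" using cb2 unfolding cs_eq ILeft cB_def by auto
    show ?thesis using one[of "(tgt P p, ih - 1, 0, mk_tape cs)", unfolded work_head_def] sd ILeft tc pl tgt_st vr wi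
      unfolding cs_eq tmrel_def by auto
  next
    case (IRight p)
    have pl: "p < length P" using cb2 unfolding cs_eq IRight cB_def by auto
    show ?thesis using one[of "(tgt P p, min (Suc (length w)) (Suc ih), 0, mk_tape cs)", unfolded work_head_def] sd IRight tc pl tgt_st vr wi
      unfolding cs_eq tmrel_def by auto
  next
    case (IGoto p)
    have pl: "p < length P" using cb2 unfolding cs_eq IGoto cB_def by auto
    show ?thesis using one[of "(tgt P p, ih, 0, mk_tape cs)", unfolded work_head_def] sd IGoto tc pl tgt_st vr wi
      unfolding cs_eq tmrel_def by auto
  next
    case (IJSym p0 p1 p2)
    define q where "q = (if inp_sym w ih = 0 then p0 else if inp_sym w ih = 1 then p1 else p2)"
    have pl: "q < length P" using cb2 unfolding cs_eq IJSym cB_def q_def by auto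
    show ?thesis using one[of "(tgt P q, ih, 0, mk_tape cs)", unfolded work_head_def] sd IJSym tc pl tgt_st vr wi
      unfolding cs_eq tmrel_def q_def by auto
  next
    case IAcc
    have "treach (tmM P) w (Sp w) tc tc" using tc Sp0 by (intro treach_refl) (simp add: work_head_def)
    then show ?thesis using rel unfolding cs_eq IAcc by (intro exI[of _ tc]) simp
  next
    case IRej
    have "treach (tmM P) w (Sp w) tc tc" using tc Sp0 by (intro treach_refl) (simp add: work_head_def)
    then show ?thesis using rel unfolding cs_eq IRej by (intro exI[of _ tc]) simp
  qed
qed

lemma sim_run:
  assumes ok: "prog_ok P"
  shows "(\<forall>j\<le>k. cB P w ((cstep P w ^^ j) c)) \<Longrightarrow> tmrel w c tc \<Longrightarrow>
    \<exists>tc'. treach (tmM P) w (Sp w) tc tc' \<and> tmrel w ((cstep P w ^^ k) c) tc'"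
proof (induction k)
  case 0
  have "treach (tmM P) w (Sp w) tc tc" using 0(2) Sp0 by (intro treach_refl) (auto simp: work_head_def tmrel_def)
  then show ?case using 0(2) by (intro exI[of _ tc]) simp
next
  case (Suc k)
  obtain tc1 where t1: "treach (tmM P) w (Sp w) tc tc1" "tmrel w ((cstep P w ^^ k) c) tc1"
    using Suc by auto
  have "cB P w ((cstep P w ^^ k) c)" "cB P w (cstep P w ((cstep P w ^^ k) c))"
    using Suc.prems(1) by (auto dest: spec[of _ k] spec[of _ "Suc k"])
  then obtain tc2 where "treach (tmM P) w (Sp w) tc1 tc2" "tmrel w (cstep P w ((cstep P w ^^ k) c)) tc2"
    using sim_step[OF _ _ t1(2) ok] by blast
  moreover note t1(1)
  ultimately have "treach (tmM P) w (Sp w) tc tc2 \<and> tmrel w ((cstep P w ^^ Suc k) c) tc2"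
    using treach_trans[of "tmM P" w "Sp w" tc tc1 tc2] by simp
  then show ?case by blast
qed


definition creach :: "instr list \<Rightarrow> bool list \<Rightarrow> cconf \<Rightarrow> cconf \<Rightarrow> bool" where
  "creach P w c c' \<longleftrightarrow> (\<exists>k. (cstep P w ^^ k) c = c' \<and> (\<forall>j\<le>k. cB P w ((cstep P w ^^ j) c)))"

lemma creach_refl: "cB P w c \<Longrightarrow> creach P w c c"
  unfolding creach_def by (intro exI[of _ 0]) auto

lemma creach_step: assumes "cstep P w c = c1" "cB P w c" "creach P w c1 c'" shows "creach P w c c'"
proof -
  obtain k where k: "(cstep P w ^^ k) c1 = c'" "\<forall>j\<le>k. cB P w ((cstep P w ^^ j) c1)"
    using assms(3) unfolding creach_def by blast
  have e: "(cstep P w ^^ Suc j) c = (cstep P w ^^ j) c1" for j using assms(1) by (simp only: funpow_Suc_right comp_apply)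
  show ?thesis unfolding creach_def
  proof (intro exI[of _ "Suc k"] conjI allI impI)
    show "(cstep P w ^^ Suc k) c = c'" using k e by simp
    fix j assume "j \<le> Suc k"
    then show "cB P w ((cstep P w ^^ j) c)"
      using assms(2) k(2) e by (cases j) auto
  qed
qed

lemma creach_trans: assumes "creach P w c1 c2" "creach P w c2 c3" shows "creach P w c1 c3"
proof -
  obtain k1 where k1: "(cstep P w ^^ k1) c1 = c2" "\<forall>j\<le>k1. cB P w ((cstep P w ^^ j) c1)"
    using assms(1) unfolding creach_def by blast
  obtain k2 where k2: "(cstep P w ^^ k2) c2 = c3" "\<forall>j\<le>k2. cB P w ((cstep P w ^^ j) c2)"
    using assms(2) unfolding creach_def by blast
  have e: "(cstep P w ^^ (j + k1)) c1 = (cstep P w ^^ j) c2" for j using k1(1) by (simp add: funpow_add)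
  show ?thesis unfolding creach_def
  proof (intro exI[of _ "k2 + k1"] conjI allI impI)
    show "(cstep P w ^^ (k2 + k1)) c1 = c3" using e k2 by simp
    fix j assume j: "j \<le> k2 + k1"
    show "cB P w ((cstep P w ^^ j) c1)"
    proof (cases "j \<le> k1")
      case True then show ?thesis using k1 by simp
    next
      case False
      then obtain j' where "j = j' + k1" "j' \<le> k2" using j by (metis add.commute le_add_diff_inverse nat_le_linear add_le_cancel_left)
      then show ?thesis using e k2 by simp
    qed
  qed
qed

definition Rb :: "bool list \<Rightarrow> (nat \<Rightarrow> nat) \<Rightarrow> bool" where
  "Rb w R \<longleftrightarrow> (\<forall>r. R r \<le> Suc (length w))"

lemma cB_intro: "pc < length P \<Longrightarrow> ih \<le> Suc (length w) \<Longrightarrow> Rb w R \<Longrightarrow> cB P w (pc, ih, R)"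
  unfolding cB_def Rb_def by simp

lemma Rb_upd: "Rb w R \<Longrightarrow> v \<le> Suc (length w) \<Longrightarrow> Rb w (R(r := v))"
  unfolding Rb_def by simp

lemma Rb_le: "Rb w R \<Longrightarrow> R r \<le> Suc (length w)"
  unfolding Rb_def by simp

definition code_at :: "instr list \<Rightarrow> nat \<Rightarrow> instr list \<Rightarrow> bool" where
  "code_at P b xs \<longleftrightarrow> b + length xs \<le> length P \<and> take (length xs) (drop b P) = xs"

lemma code_at_nth: "code_at P b xs \<Longrightarrow> i < length xs \<Longrightarrow> P ! (b + i) = xs ! i \<and> b + i < length P"
proof -
  assume a: "code_at P b xs" "i < length xs"
  then have l: "b + i < length P" "b \<le> length P" unfolding code_at_def by auto
  have "xs ! i = take (length xs) (drop b P) ! i" using a unfolding code_at_def by simp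
  also have "\<dots> = drop b P ! i" using a(2) by simp
  also have "\<dots> = P ! (b + i)" using l by simp
  finally show ?thesis using l by simp
qed

lemma code_at_app1: "code_at P b (xs @ ys) \<Longrightarrow> code_at P b xs"
  unfolding code_at_def by (auto simp: take_add append_eq_append_conv)

lemma code_at_app2: "code_at P b (xs @ ys) \<Longrightarrow> code_at P (b + length xs) ys"
  unfolding code_at_def by (auto simp: take_add drop_drop add.commute append_eq_append_conv)

lemma cstep_at: "P ! pc = ins \<Longrightarrow> pc < length P \<Longrightarrow> cstep P w (pc, ih, R) = (case ins of
     IInc r p \<Rightarrow> (p, ih, R(r := Suc (R r)))
   | IClr r p \<Rightarrow> (p, ih, R(r := 0))
   | IJEq r s p1 p2 \<Rightarrow> (if R r = R s then p1 else p2, ih, R)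
   | ILeft p \<Rightarrow> (p, ih - 1, R)
   | IRight p \<Rightarrow> (p, min (Suc (length w)) (Suc ih), R)
   | IJSym p0 p1 p2 \<Rightarrow> (if inp_sym w ih = 0 then p0 else if inp_sym w ih = 1 then p1 else p2, ih, R)
   | IGoto p \<Rightarrow> (p, ih, R)
   | IAcc \<Rightarrow> (pc, ih, R) | IRej \<Rightarrow> (pc, ih, R))"
  unfolding cstep_def by (cases ins) auto

definition home :: "nat \<Rightarrow> instr list" where
  "home b = [ILeft (b + 1), IJSym (b + 2) b b]"

definition rightn :: "nat \<Rightarrow> nat \<Rightarrow> nat \<Rightarrow> instr list" where
  "rightn b t x = [IClr t (b + 1), IJEq t x (b + 4) (b + 2), IInc t (b + 3), IRight (b + 1)]"

lemma inp_sym0: "ih \<le> Suc (length w) \<Longrightarrow> inp_sym w ih = 0 \<longleftrightarrow> ih = 0 \<or> ih = Suc (length w)"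
  unfolding inp_sym_def by auto

lemma home_spec:
  assumes ca: "code_at P b (home b)" and ex: "b + 2 < length P" and rb: "Rb w R"
  shows "ih \<le> Suc (length w) \<Longrightarrow> creach P w (b, ih, R) (b + 2, 0, R)"
proof (induction ih)
  case 0
  have n0: "P ! b = ILeft (b + 1)" "b < length P" using code_at_nth[OF ca, of 0] by (auto simp: home_def)
  have n1: "P ! (b + 1) = IJSym (b + 2) b b" "b + 1 < length P" using code_at_nth[OF ca, of 1] by (auto simp: home_def)
  have "inp_sym w 0 = 0" unfolding inp_sym_def by simp
  then have s1: "cstep P w (b, 0, R) = (b + 1, 0, R)" and s2: "cstep P w (b + 1, 0, R) = (b + 2, 0, R)"
    using cstep_at[OF n0, of w 0 R] cstep_at[OF n1, of w 0 R] by auto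
  show ?case
    by (rule creach_step[OF s1 _ creach_step[OF s2 _ creach_refl]]) (use ex rb in \<open>auto intro!: cB_intro\<close>)
next
  case (Suc i)
  have n0: "P ! b = ILeft (b + 1)" "b < length P" using code_at_nth[OF ca, of 0] by (auto simp: home_def)
  have n1: "P ! (b + 1) = IJSym (b + 2) b b" "b + 1 < length P" using code_at_nth[OF ca, of 1] by (auto simp: home_def)
  have s1: "cstep P w (b, Suc i, R) = (b + 1, i, R)" using cstep_at[OF n0, of w "Suc i" R] by auto
  show ?case
  proof (cases "i = 0")
    case True
    have "inp_sym w 0 = 0" unfolding inp_sym_def by simp
    then have s2: "cstep P w (b + 1, i, R) = (b + 2, 0, R)" using cstep_at[OF n1, of w i R] True by auto
    show ?thesis
      by (rule creach_step[OF s1 _ creach_step[OF s2 _ creach_refl]]) (use ex rb Suc.prems in \<open>auto intro!: cB_intro\<close>)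
  next
    case False
    then have "inp_sym w i \<noteq> 0" using inp_sym0[of i w] Suc.prems by auto
    then have s2: "cstep P w (b + 1, i, R) = (b, i, R)" using cstep_at[OF n1, of w i R] by auto
    show ?thesis
      by (rule creach_step[OF s1 _ creach_step[OF s2 _ Suc.IH]]) (use ex rb Suc.prems in \<open>auto intro!: cB_intro\<close>)
  qed
qed

lemma rightn_loop:
  assumes ca: "code_at P b (rightn b t x)" and ex: "b + 4 < length P" and tx: "t \<noteq> x"
    and rb: "Rb w R"
  shows "i \<le> R x \<Longrightarrow> ih \<le> Suc (length w) \<Longrightarrow>
    creach P w (b + 1, ih, R(t := i)) (b + 4, min (Suc (length w)) (ih + (R x - i)), R(t := R x))"
proof (induction "R x - i" arbitrary: i ih)
  case 0
  have n1: "P ! (b + 1) = IJEq t x (b + 4) (b + 2)" "b + 1 < length P" using code_at_nth[OF ca, of 1] by (auto simp: rightn_def)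
  have i: "i = R x" using 0 by simp
  have s1: "cstep P w (b + 1, ih, R(t := i)) = (b + 4, ih, R(t := R x))"
    using cstep_at[OF n1, of w ih "R(t := i)"] tx i by auto
  have rb': "Rb w (R(t := R x))" using rb by (simp add: Rb_upd Rb_le)
  have e: "min (Suc (length w)) (ih + (R x - i)) = ih" using 0 i by simp
  show ?case unfolding e
    by (rule creach_step[OF s1 _ creach_refl]) (use ex rb' n1 0 in \<open>auto intro!: cB_intro simp: Rb_upd Rb_le rb\<close>)
next
  case (Suc k)
  have n1: "P ! (b + 1) = IJEq t x (b + 4) (b + 2)" "b + 1 < length P" using code_at_nth[OF ca, of 1] by (auto simp: rightn_def)
  have n2: "P ! (b + 2) = IInc t (b + 3)" "b + 2 < length P" using code_at_nth[OF ca, of 2] by (auto simp: rightn_def)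
  have n3: "P ! (b + 3) = IRight (b + 1)" "b + 3 < length P" using code_at_nth[OF ca, of 3] by (auto simp: rightn_def)
  have ne: "i \<noteq> R x" "i < R x" using Suc by auto
  have s1: "cstep P w (b + 1, ih, R(t := i)) = (b + 2, ih, R(t := i))"
    using cstep_at[OF n1, of w ih "R(t := i)"] tx ne by auto
  have s2: "cstep P w (b + 2, ih, R(t := i)) = (b + 3, ih, R(t := Suc i))"
    using cstep_at[OF n2, of w ih "R(t := i)"] by auto
  have s3: "cstep P w (b + 3, ih, R(t := Suc i)) = (b + 1, min (Suc (length w)) (Suc ih), R(t := Suc i))"
    using cstep_at[OF n3, of w ih "R(t := Suc i)"] by auto
  have IH: "creach P w (b + 1, min (Suc (length w)) (Suc ih), R(t := Suc i))
      (b + 4, min (Suc (length w)) (min (Suc (length w)) (Suc ih) + (R x - Suc i)), R(t := R x))"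
    using Suc.hyps(1)[of "Suc i" "min (Suc (length w)) (Suc ih)"] Suc.hyps(2) ne by auto
  have eq: "min (Suc (length w)) (min (Suc (length w)) (Suc ih) + (R x - Suc i)) = min (Suc (length w)) (ih + (R x - i))"
    using ne by (simp add: min_def) arith
  have rbi: "Rb w (R(t := i))" "Rb w (R(t := Suc i))" using rb ne Rb_le[OF rb, of x] by (auto intro: Rb_upd)
  show ?case
    by (rule creach_step[OF s1 _ creach_step[OF s2 _ creach_step[OF s3 _ IH[unfolded eq]]]])
       (use ex rbi Suc.prems in \<open>auto intro!: cB_intro\<close>)
qed

lemma rightn_spec:
  assumes ca: "code_at P b (rightn b t x)" and ex: "b + 4 < length P" and tx: "t \<noteq> x"
    and rb: "Rb w R" and ih: "ih \<le> Suc (length w)"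
  shows "creach P w (b, ih, R) (b + 4, min (Suc (length w)) (ih + R x), R(t := R x))"
proof -
  have n0: "P ! b = IClr t (b + 1)" "b < length P" using code_at_nth[OF ca, of 0] by (auto simp: rightn_def)
  have s0: "cstep P w (b, ih, R) = (b + 1, ih, R(t := 0))" using cstep_at[OF n0, of w ih R] by auto
  have "creach P w (b + 1, ih, R(t := 0)) (b + 4, min (Suc (length w)) (ih + (R x - 0)), R(t := R x))"
    using rightn_loop[OF ca ex tx rb, of 0 ih] ih by simp
  then show ?thesis
    by (intro creach_step[OF s0]) (use ex rb ih in \<open>auto intro!: cB_intro\<close>)
qed

lemma code_at_sub:
  assumes "code_at P b xs" "j + length ys \<le> length xs" "take (length ys) (drop j xs) = ys"
  shows "code_at P (b + j) ys"
proof -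
  have l: "b + length xs \<le> length P" "take (length xs) (drop b P) = xs" using assms(1) unfolding code_at_def by auto
  have "take (length ys) (drop (b + j) P) = take (length ys) (drop j (drop b P))" by (simp add: add.commute)
  also have "\<dots> = take (length ys) (drop j (take (length xs) (drop b P)))"
    using assms(2) by (simp add: drop_take min_def)
  also have "\<dots> = ys" using l(2) assms(3) by simp
  finally show ?thesis unfolding code_at_def using l assms(2) by simp
qed

definition read :: "nat \<Rightarrow> nat \<Rightarrow> nat \<Rightarrow> nat \<Rightarrow> nat \<Rightarrow> nat \<Rightarrow> instr list" where
  "read b x y p0 p1 p2 = home b @ [IRight (b + 3), IClr 6 (b + 4), IJEq 6 x (b + 11) (b + 5), IInc 6 (b + 6)]
     @ rightn (b + 6) 7 0 @ [IGoto (b + 4)] @ rightn (b + 11) 7 y @ [IJSym p0 p1 p2]"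

lemma read_len: "length (read b x y p0 p1 p2) = 16"
  by (simp add: read_def home_def rightn_def)

lemma read_loop:
  assumes ca: "code_at P b (read b x y p0 p1 p2)" and x: "x \<noteq> 6" "x \<noteq> 7"
    and rb: "Rb w R"
  shows "i \<le> R x \<Longrightarrow> u \<le> Suc (length w) \<Longrightarrow> \<exists>u'. u' \<le> Suc (length w) \<and>
    creach P w (b + 4, min (Suc (length w)) (Suc (i * R 0)), R(6 := i, 7 := u))
      (b + 11, min (Suc (length w)) (Suc (R x * R 0)), R(6 := R x, 7 := u'))"
proof (induction "R x - i" arbitrary: i u)
  case 0
  have l16: "b + 16 \<le> length P" using ca read_len unfolding code_at_def by metis
  have n4: "P ! (b + 4) = IJEq 6 x (b + 11) (b + 5)" "b + 4 < length P" using code_at_nth[OF ca, of 4] by (auto simp: read_def home_def)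
  have i: "i = R x" using 0 by simp
  have s1: "cstep P w (b + 4, min (Suc (length w)) (Suc (i * R 0)), R(6 := i, 7 := u)) =
      (b + 11, min (Suc (length w)) (Suc (i * R 0)), R(6 := i, 7 := u))"
    using cstep_at[OF n4, of w "min (Suc (length w)) (Suc (i * R 0))" "R(6 := i, 7 := u)"] x i by auto
  have rb': "Rb w (R(6 := i, 7 := u))" using rb 0 Rb_le[OF rb, of x] by (auto intro!: Rb_upd)
  have "creach P w (b + 4, min (Suc (length w)) (Suc (i * R 0)), R(6 := i, 7 := u))
      (b + 11, min (Suc (length w)) (Suc (i * R 0)), R(6 := i, 7 := u))"
    by (rule creach_step[OF s1 _ creach_refl]) (use l16 rb' i in \<open>auto intro!: cB_intro\<close>)
  then show ?case using 0(3) unfolding i by blast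
next
  case (Suc k)
  have l16: "b + 16 \<le> length P" using ca read_len unfolding code_at_def by metis
  have n4: "P ! (b + 4) = IJEq 6 x (b + 11) (b + 5)" "b + 4 < length P" using code_at_nth[OF ca, of 4] by (auto simp: read_def home_def)
  have n5: "P ! (b + 5) = IInc 6 (b + 6)" "b + 5 < length P" using code_at_nth[OF ca, of 5] by (auto simp: read_def home_def)
  have n10: "P ! (b + 10) = IGoto (b + 4)" "b + 10 < length P" using code_at_nth[OF ca, of 10] by (auto simp: read_def home_def rightn_def)
  have cr: "code_at P (b + 6) (rightn (b + 6) 7 0)"
    using code_at_sub[OF ca, of 6 "rightn (b + 6) 7 0"] by (simp add: read_def home_def rightn_def)
  have ne: "i < R x" using Suc by auto
  let ?L = "Suc (length w)"
  let ?pos = "min ?L (Suc (i * R 0))"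
  have s1: "cstep P w (b + 4, ?pos, R(6 := i, 7 := u)) = (b + 5, ?pos, R(6 := i, 7 := u))"
    using cstep_at[OF n4, of w ?pos "R(6 := i, 7 := u)"] x ne by auto
  have s2: "cstep P w (b + 5, ?pos, R(6 := i, 7 := u)) = (b + 6, ?pos, R(6 := Suc i, 7 := u))"
    using cstep_at[OF n5, of w ?pos "R(6 := i, 7 := u)"] by auto
  have rb1: "Rb w (R(6 := i, 7 := u))" "Rb w (R(6 := Suc i, 7 := u))" using rb Suc.prems ne Rb_le[OF rb, of x] by (auto intro!: Rb_upd)
  have pos: "?pos \<le> ?L" by simp
  have r: "creach P w (b + 6, ?pos, R(6 := Suc i, 7 := u)) (b + 10, min ?L (?pos + R 0), R(6 := Suc i, 7 := R 0))"
    using rightn_spec[OF cr _ _ rb1(2) pos] l16 unfolding add.assoc by simp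
  have s3: "cstep P w (b + 10, min ?L (?pos + R 0), R(6 := Suc i, 7 := R 0)) = (b + 4, min ?L (?pos + R 0), R(6 := Suc i, 7 := R 0))"
    using cstep_at[OF n10] by auto
  have eq: "min ?L (?pos + R 0) = min ?L (Suc (Suc i * R 0))" by (simp add: min_def)
  obtain u' where u': "u' \<le> ?L" "creach P w (b + 4, min ?L (Suc (Suc i * R 0)), R(6 := Suc i, 7 := R 0))
      (b + 11, min ?L (Suc (R x * R 0)), R(6 := R x, 7 := u'))"
  proof -
    have kk: "k = R x - Suc i" using Suc.hyps(2) by arith
    show ?thesis using Suc.hyps(1)[of "Suc i" "R 0", OF kk] ne Rb_le[OF rb, of 0] that by auto
  qed
  have rb2: "Rb w (R(6 := Suc i, 7 := R 0))" using rb ne Rb_le[OF rb, of x] Rb_le[OF rb, of 0] by (auto intro!: Rb_upd)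
  have "creach P w (b + 4, ?pos, R(6 := i, 7 := u)) (b + 11, min ?L (Suc (R x * R 0)), R(6 := R x, 7 := u'))"
    by (rule creach_step[OF s1 _ creach_step[OF s2 _ creach_trans[OF r creach_step[OF s3 _ u'(2)[folded eq]]]]])
       (use l16 rb1 rb2 in \<open>auto intro!: cB_intro\<close>)
  then show ?case using u'(1) by blast
qed

lemma read_spec:
  assumes ca: "code_at P b (read b x y p0 p1 p2)" and x: "x \<noteq> 6" "x \<noteq> 7" and y: "y \<noteq> 6" "y \<noteq> 7"
    and ps: "p0 < length P" "p1 < length P" "p2 < length P"
    and rb: "Rb w R" and ih: "ih \<le> Suc (length w)"
  shows "creach P w (b, ih, R)
    (let pos = min (Suc (length w)) (Suc (R x * R 0 + R y)) in
      (if inp_sym w pos = 0 then p0 else if inp_sym w pos = 1 then p1 else p2, pos, R(6 := R x, 7 := R y)))"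
proof -
  let ?L = "Suc (length w)"
  have l16: "b + 16 \<le> length P" using ca read_len unfolding code_at_def by metis
  have ch: "code_at P b (home b)"
    using code_at_sub[OF ca, of 0 "home b"] by (simp add: read_def home_def rightn_def)
  have cr: "code_at P (b + 11) (rightn (b + 11) 7 y)"
    using code_at_sub[OF ca, of 11 "rightn (b + 11) 7 y"] by (simp add: read_def home_def rightn_def)
  have n2: "P ! (b + 2) = IRight (b + 3)" "b + 2 < length P" using code_at_nth[OF ca, of 2] by (auto simp: read_def home_def)
  have n3: "P ! (b + 3) = IClr 6 (b + 4)" "b + 3 < length P" using code_at_nth[OF ca, of 3] by (auto simp: read_def home_def)
  have n15: "P ! (b + 15) = IJSym p0 p1 p2" "b + 15 < length P" using code_at_nth[OF ca, of 15] by (auto simp: read_def home_def rightn_def)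
  have h: "creach P w (b, ih, R) (b + 2, 0, R)" using home_spec[OF ch _ rb ih] l16 by simp
  have s2: "cstep P w (b + 2, 0, R) = (b + 3, 1, R)" using cstep_at[OF n2, of w 0 R] by auto
  have s3: "cstep P w (b + 3, 1, R) = (b + 4, min ?L (Suc (0 * R 0)), R(6 := 0, 7 := R 7))" using cstep_at[OF n3, of w 1 R] by auto
  obtain u' where u': "u' \<le> ?L" "creach P w (b + 4, min ?L (Suc (0 * R 0)), R(6 := 0, 7 := R 7))
      (b + 11, min ?L (Suc (R x * R 0)), R(6 := R x, 7 := u'))"
    using read_loop[OF ca x rb, of 0 "R 7"] Rb_le[OF rb, of 7] by auto
  have rb3: "Rb w (R(6 := R x, 7 := u'))" using rb u'(1) Rb_le[OF rb, of x] by (auto intro!: Rb_upd)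
  have pos1: "min ?L (Suc (R x * R 0)) \<le> ?L" by simp
  have r2: "creach P w (b + 11, min ?L (Suc (R x * R 0)), R(6 := R x, 7 := u'))
      (b + 15, min ?L (min ?L (Suc (R x * R 0)) + R y), R(6 := R x, 7 := R y))"
    using rightn_spec[OF cr _ _ rb3 pos1] l16 y unfolding add.assoc by simp
  define pos where "pos = min ?L (Suc (R x * R 0 + R y))"
  have peq: "min ?L (min ?L (Suc (R x * R 0)) + R y) = pos" unfolding pos_def by (simp add: min_def)
  have s15: "cstep P w (b + 15, pos, R(6 := R x, 7 := R y)) =
      (if inp_sym w pos = 0 then p0 else if inp_sym w pos = 1 then p1 else p2, pos, R(6 := R x, 7 := R y))"
    using cstep_at[OF n15] by auto
  have rb4: "Rb w (R(6 := R x, 7 := R y))" using rb Rb_le[OF rb, of x] Rb_le[OF rb, of y] by (auto intro!: Rb_upd)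
  have fin: "creach P w (b + 15, pos, R(6 := R x, 7 := R y))
      (if inp_sym w pos = 0 then p0 else if inp_sym w pos = 1 then p1 else p2, pos, R(6 := R x, 7 := R y))"
    by (rule creach_step[OF s15 _ creach_refl]) (use l16 rb4 ps in \<open>auto intro!: cB_intro simp: pos_def\<close>)
  have rb0: "Rb w (R(6 := 0, 7 := R 7))" using rb unfolding Rb_def by auto
  have "creach P w (b, ih, R)
      (if inp_sym w pos = 0 then p0 else if inp_sym w pos = 1 then p1 else p2, pos, R(6 := R x, 7 := R y))"
    by (rule creach_trans[OF h creach_step[OF s2 _ creach_step[OF s3 _ creach_trans[OF u'(2) creach_trans[OF r2[unfolded peq] fin]]]]])
       (use l16 rb rb0 in \<open>auto intro!: cB_intro\<close>)
  then show ?thesis unfolding pos_def Let_def .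
qed



definition prog :: "instr list" where
  "prog = [IInc 0 1] @ read 1 1 1 183 17 17 @
    [IRight 18, IJSym 21 19 19, IInc 0 20, IInc 1 1, IClr 2 22, IJEq 2 0 182 23, IClr 3 24, IJEq 3 0 180 25] @
    read 25 2 3 183 41 57 @ read 41 3 2 183 74 183 @ [IJEq 2 3 183 58] @ read 58 3 2 183 183 74 @
    [IClr 4 75, IJEq 4 0 178 76, IClr 5 77, IJEq 5 0 176 78] @
    read 78 2 3 183 174 94 @ read 94 3 4 183 174 110 @ read 110 4 5 183 174 126 @
    read 126 2 4 183 142 174 @ read 142 3 5 183 158 174 @ read 158 2 5 183 183 174 @
    [IInc 5 175, IGoto 77, IInc 4 177, IGoto 75, IInc 3 179, IGoto 24, IInc 2 181, IGoto 22, IAcc, IRej]"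

lemma prog_len: "length prog = 184"
  by (simp add: prog_def read_len)

lemma prog_ok: "prog_ok prog"
  by (simp add: prog_ok_def prog_def read_def home_def rightn_def Kt_def)

definition E :: "bool list \<Rightarrow> nat \<Rightarrow> nat \<Rightarrow> nat \<Rightarrow> bool" where
  "E w n i j = w ! (i * n + j)"

definition reachQ :: "bool list \<Rightarrow> cconf \<Rightarrow> nat \<Rightarrow> ((nat \<Rightarrow> nat) \<Rightarrow> bool) \<Rightarrow> bool" where
  "reachQ w c q Q \<longleftrightarrow> (\<exists>ih' R'. creach prog w c (q, ih', R') \<and> ih' \<le> Suc (length w) \<and> Rb w R' \<and> Q R')"

lemma reachQ_refl: "pc < length prog \<Longrightarrow> ih \<le> Suc (length w) \<Longrightarrow> Rb w R \<Longrightarrow> Q R \<Longrightarrow> reachQ w (pc, ih, R) pc Q"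
  unfolding reachQ_def by (blast intro: creach_refl cB_intro)

lemma reachQ_creach: "creach prog w c c1 \<Longrightarrow> reachQ w c1 q Q \<Longrightarrow> reachQ w c q Q"
  unfolding reachQ_def by (blast intro: creach_trans)

lemma reachQ_step: "cstep prog w (pc, ih, R) = c1 \<Longrightarrow> pc < length prog \<Longrightarrow> ih \<le> Suc (length w) \<Longrightarrow> Rb w R \<Longrightarrow>
    reachQ w c1 q Q \<Longrightarrow> reachQ w (pc, ih, R) q Q"
  unfolding reachQ_def by (blast intro: creach_step cB_intro)

lemma reachQ_cont: assumes "reachQ w c q Q"
  and "\<And>ih' R'. ih' \<le> Suc (length w) \<Longrightarrow> Rb w R' \<Longrightarrow> Q R' \<Longrightarrow> reachQ w (q, ih', R') q2 Q2"
  shows "reachQ w c q2 Q2"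
proof -
  obtain ih' R' where a: "creach prog w c (q, ih', R')" "ih' \<le> Suc (length w)" "Rb w R'" "Q R'"
    using assms(1) unfolding reachQ_def by blast
  show ?thesis using reachQ_creach[OF a(1) assms(2)[OF a(2,3,4)]] .
qed

lemma reachQ_mono: "reachQ w c q Q \<Longrightarrow> (\<And>R. Q R \<Longrightarrow> Q' R) \<Longrightarrow> reachQ w c q Q'"
  unfolding reachQ_def by blast

lemma reachQ_eqpc: "reachQ w c q Q \<Longrightarrow> q = q' \<Longrightarrow> reachQ w c q' Q"
  by simp

lemma pos_lt: fixes i j n :: nat assumes "i < n" "j < n" shows "i * n + j < n * n"
proof -
  have "i * n + j < i * n + n" using assms(2) by (rule add_strict_left_mono)
  also have "\<dots> = Suc i * n" by simp
  also have "\<dots> \<le> n * n" using assms(1) by (intro mult_le_mono1) simp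
  finally show ?thesis .
qed

lemma read_step:
  assumes ca: "code_at prog b (read b x y p0 p1 p2)" and xy: "x < 6" "y < 6"
    and ps: "p0 < length prog" "p1 < length prog" "p2 < length prog"
    and nn: "n * n = length w" and R0: "R 0 = n" and rx: "R x < n" "R y < n"
    and rb: "Rb w R" and ih: "ih \<le> Suc (length w)"
    and cont: "\<And>ih' R'. ih' \<le> Suc (length w) \<Longrightarrow> Rb w R' \<Longrightarrow> (\<forall>r<6. R' r = R r) \<Longrightarrow>
       reachQ w (if E w n (R x) (R y) then p2 else p1, ih', R') q Q"
  shows "reachQ w (b, ih, R) q Q"
proof -
  have lt: "R x * n + R y < length w" using pos_lt[OF rx] nn by simp
  define pos where "pos = min (Suc (length w)) (Suc (R x * R 0 + R y))"
  have pe: "pos = Suc (R x * n + R y)" unfolding pos_def R0 using lt by simp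
  have isy: "inp_sym w pos = (if E w n (R x) (R y) then 2 else 1)"
    unfolding pe inp_sym_def E_def using lt by simp
  have c: "creach prog w (b, ih, R) (if E w n (R x) (R y) then p2 else p1, pos, R(6 := R x, 7 := R y))"
    using read_spec[OF ca _ _ _ _ ps rb ih] xy isy unfolding pos_def[symmetric] Let_def by auto
  have rb': "Rb w (R(6 := R x, 7 := R y))" using rb unfolding Rb_def by auto
  have "reachQ w (if E w n (R x) (R y) then p2 else p1, pos, R(6 := R x, 7 := R y)) q Q"
    by (rule cont) (use rb' lt in \<open>auto simp: pe\<close>)
  then show ?thesis using reachQ_creach[OF c] by blast
qed


definition agr :: "nat \<Rightarrow> (nat \<Rightarrow> nat) \<Rightarrow> (nat \<Rightarrow> nat) \<Rightarrow> bool" where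
  "agr k R X \<longleftrightarrow> (\<forall>r<k. X r = R r)"

definition P4at :: "bool list \<Rightarrow> nat \<Rightarrow> nat \<Rightarrow> nat \<Rightarrow> nat \<Rightarrow> nat \<Rightarrow> bool" where
  "P4at w n a b c d \<longleftrightarrow> E w n a b \<and> E w n b c \<and> E w n c d \<and> \<not> E w n a c \<and> \<not> E w n b d \<and> \<not> E w n a d"

lemma agr_trans: "agr k R X \<Longrightarrow> agr k X Y \<Longrightarrow> agr k R Y"
  unfolding agr_def by simp

lemma agr_mono: "agr k R X \<Longrightarrow> j \<le> k \<Longrightarrow> agr j R X"
  unfolding agr_def by simp

lemma ca78: "code_at prog 78 (read 78 2 3 183 174 94)"
  by (simp add: code_at_def prog_def read_def home_def rightn_def)
lemma ca94: "code_at prog 94 (read 94 3 4 183 174 110)"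
  by (simp add: code_at_def prog_def read_def home_def rightn_def)
lemma ca110: "code_at prog 110 (read 110 4 5 183 174 126)"
  by (simp add: code_at_def prog_def read_def home_def rightn_def)
lemma ca126: "code_at prog 126 (read 126 2 4 183 142 174)"
  by (simp add: code_at_def prog_def read_def home_def rightn_def)
lemma ca142: "code_at prog 142 (read 142 3 5 183 158 174)"
  by (simp add: code_at_def prog_def read_def home_def rightn_def)
lemma ca158: "code_at prog 158 (read 158 2 5 183 183 174)"
  by (simp add: code_at_def prog_def read_def home_def rightn_def)

lemma dbody:
  assumes nn: "n * n = length w" and R: "R 0 = n" "R 2 = a" "R 3 = b" "R 4 = c" "R 5 = d"
    and lt: "a < n" "b < n" "c < n" "d < n" and rb: "Rb w R" and ih: "ih \<le> Suc (length w)"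
  shows "reachQ w (78, ih, R) (if P4at w n a b c d then 183 else 174) (agr 6 R)"
proof -
  let ?L = "Suc (length w)"
  have pl: "length prog = 184" by (rule prog_len)
  have fin: "reachQ w (q, i, X) q (agr 6 R)" if "q < 184" "i \<le> ?L" "Rb w X" "agr 6 R X" for q i X
    using reachQ_refl[where pc=q and w=w and ih=i and R=X and Q="agr 6 R"] that pl by simp
  have L6: "reachQ w (158, i, X) (if \<not> E w n a d then 183 else 174) (agr 6 R)"
    if "i \<le> ?L" "Rb w X" "agr 6 R X" for i X
  proof (rule read_step[OF ca158 _ _ _ _ _ nn _ _ _ that(2,1)])
    fix i' X' assume a: "i' \<le> ?L" "Rb w X'" "\<forall>r<6. X' r = X r"
    have ag: "agr 6 R X'" using a(3) that(3) unfolding agr_def by simp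
    show "reachQ w (if E w n (X 2) (X 5) then 174 else 183, i', X') (if \<not> E w n a d then 183 else 174) (agr 6 R)"
      using fin[OF _ a(1,2) ag] that(3) R unfolding agr_def by auto
  qed (use that R lt pl in \<open>auto simp: agr_def\<close>)
  have L5: "reachQ w (142, i, X) (if \<not> E w n b d \<and> \<not> E w n a d then 183 else 174) (agr 6 R)"
    if "i \<le> ?L" "Rb w X" "agr 6 R X" for i X
  proof (rule read_step[OF ca142 _ _ _ _ _ nn _ _ _ that(2,1)])
    fix i' X' assume a: "i' \<le> ?L" "Rb w X'" "\<forall>r<6. X' r = X r"
    have ag: "agr 6 R X'" using a(3) that(3) unfolding agr_def by simp
    show "reachQ w (if E w n (X 3) (X 5) then 174 else 158, i', X') (if \<not> E w n b d \<and> \<not> E w n a d then 183 else 174) (agr 6 R)"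
      using fin[OF _ a(1,2) ag] L6[OF a(1,2) ag] that(3) R unfolding agr_def by auto
  qed (use that R lt pl in \<open>auto simp: agr_def\<close>)
  have L4: "reachQ w (126, i, X) (if \<not> E w n a c \<and> \<not> E w n b d \<and> \<not> E w n a d then 183 else 174) (agr 6 R)"
    if "i \<le> ?L" "Rb w X" "agr 6 R X" for i X
  proof (rule read_step[OF ca126 _ _ _ _ _ nn _ _ _ that(2,1)])
    fix i' X' assume a: "i' \<le> ?L" "Rb w X'" "\<forall>r<6. X' r = X r"
    have ag: "agr 6 R X'" using a(3) that(3) unfolding agr_def by simp
    show "reachQ w (if E w n (X 2) (X 4) then 174 else 142, i', X') (if \<not> E w n a c \<and> \<not> E w n b d \<and> \<not> E w n a d then 183 else 174) (agr 6 R)"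
      using fin[OF _ a(1,2) ag] L5[OF a(1,2) ag] that(3) R unfolding agr_def by auto
  qed (use that R lt pl in \<open>auto simp: agr_def\<close>)
  have L3: "reachQ w (110, i, X) (if E w n c d \<and> \<not> E w n a c \<and> \<not> E w n b d \<and> \<not> E w n a d then 183 else 174) (agr 6 R)"
    if "i \<le> ?L" "Rb w X" "agr 6 R X" for i X
  proof (rule read_step[OF ca110 _ _ _ _ _ nn _ _ _ that(2,1)])
    fix i' X' assume a: "i' \<le> ?L" "Rb w X'" "\<forall>r<6. X' r = X r"
    have ag: "agr 6 R X'" using a(3) that(3) unfolding agr_def by simp
    show "reachQ w (if E w n (X 4) (X 5) then 126 else 174, i', X') (if E w n c d \<and> \<not> E w n a c \<and> \<not> E w n b d \<and> \<not> E w n a d then 183 else 174) (agr 6 R)"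
      using fin[OF _ a(1,2) ag] L4[OF a(1,2) ag] that(3) R unfolding agr_def by auto
  qed (use that R lt pl in \<open>auto simp: agr_def\<close>)
  have L2: "reachQ w (94, i, X) (if E w n b c \<and> E w n c d \<and> \<not> E w n a c \<and> \<not> E w n b d \<and> \<not> E w n a d then 183 else 174) (agr 6 R)"
    if "i \<le> ?L" "Rb w X" "agr 6 R X" for i X
  proof (rule read_step[OF ca94 _ _ _ _ _ nn _ _ _ that(2,1)])
    fix i' X' assume a: "i' \<le> ?L" "Rb w X'" "\<forall>r<6. X' r = X r"
    have ag: "agr 6 R X'" using a(3) that(3) unfolding agr_def by simp
    show "reachQ w (if E w n (X 3) (X 4) then 110 else 174, i', X') (if E w n b c \<and> E w n c d \<and> \<not> E w n a c \<and> \<not> E w n b d \<and> \<not> E w n a d then 183 else 174) (agr 6 R)"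
      using fin[OF _ a(1,2) ag] L3[OF a(1,2) ag] that(3) R unfolding agr_def by auto
  qed (use that R lt pl in \<open>auto simp: agr_def\<close>)
  have ag0: "agr 6 R R" unfolding agr_def by simp
  show ?thesis
  proof (rule read_step[OF ca78 _ _ _ _ _ nn _ _ _ rb ih])
    fix i' X' assume a: "i' \<le> ?L" "Rb w X'" "\<forall>r<6. X' r = R r"
    have ag: "agr 6 R X'" using a(3) unfolding agr_def by simp
    show "reachQ w (if E w n (R 2) (R 3) then 94 else 174, i', X') (if P4at w n a b c d then 183 else 174) (agr 6 R)"
      using fin[OF _ a(1,2) ag] L2[OF a(1,2) ag] R unfolding P4at_def by auto
  qed (use R lt pl in auto)
qed

lemma pn: "prog ! 0 = IInc 0 1" "prog ! 17 = IRight 18" "prog ! 18 = IJSym 21 19 19" "prog ! 19 = IInc 0 20"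
  "prog ! 20 = IInc 1 1" "prog ! 21 = IClr 2 22" "prog ! 22 = IJEq 2 0 182 23" "prog ! 23 = IClr 3 24"
  "prog ! 24 = IJEq 3 0 180 25" "prog ! 57 = IJEq 2 3 183 58" "prog ! 74 = IClr 4 75" "prog ! 75 = IJEq 4 0 178 76"
  "prog ! 76 = IClr 5 77" "prog ! 77 = IJEq 5 0 176 78" "prog ! 174 = IInc 5 175" "prog ! 175 = IGoto 77"
  "prog ! 176 = IInc 4 177" "prog ! 177 = IGoto 75" "prog ! 178 = IInc 3 179" "prog ! 179 = IGoto 24"
  "prog ! 180 = IInc 2 181" "prog ! 181 = IGoto 22" "prog ! 182 = IAcc" "prog ! 183 = IRej"
  by (simp_all add: prog_def read_def home_def rightn_def)

lemma cstep_prog: "pc < 184 \<Longrightarrow> cstep prog w (pc, ih, R) = (case prog ! pc of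
     IInc r p \<Rightarrow> (p, ih, R(r := Suc (R r)))
   | IClr r p \<Rightarrow> (p, ih, R(r := 0))
   | IJEq r s p1 p2 \<Rightarrow> (if R r = R s then p1 else p2, ih, R)
   | ILeft p \<Rightarrow> (p, ih - 1, R)
   | IRight p \<Rightarrow> (p, min (Suc (length w)) (Suc ih), R)
   | IJSym p0 p1 p2 \<Rightarrow> (if inp_sym w ih = 0 then p0 else if inp_sym w ih = 1 then p1 else p2, ih, R)
   | IGoto p \<Rightarrow> (p, ih, R)
   | IAcc \<Rightarrow> (pc, ih, R) | IRej \<Rightarrow> (pc, ih, R))"
  using cstep_at[of prog pc "prog ! pc" w ih R] prog_len by simp

lemma rstep: "pc < 184 \<Longrightarrow> ih \<le> Suc (length w) \<Longrightarrow> Rb w R \<Longrightarrow> reachQ w (cstep prog w (pc, ih, R)) q Q \<Longrightarrow> reachQ w (pc, ih, R) q Q"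
  using reachQ_step[where w=w and pc=pc and ih=ih and R=R and q=q and Q=Q] prog_len by simp

lemma rstep': "cstep prog w (pc, ih, R) = c1 \<Longrightarrow> pc < 184 \<Longrightarrow> ih \<le> Suc (length w) \<Longrightarrow> Rb w R \<Longrightarrow> reachQ w c1 q Q \<Longrightarrow> reachQ w (pc, ih, R) q Q"
  using rstep by simp

lemma rfin: "pc < 184 \<Longrightarrow> ih \<le> Suc (length w) \<Longrightarrow> Rb w R \<Longrightarrow> Q R \<Longrightarrow> reachQ w (pc, ih, R) pc Q"
  using reachQ_refl[where w=w and pc=pc and ih=ih and R=R and Q=Q] prog_len by simp

lemma n_le: "n * n = length w \<Longrightarrow> n \<le> length w"
  by (metis le_square)

lemma dloop:
  assumes nn: "n * n = length w" and R: "R 0 = n" "R 2 = a" "R 3 = b" "R 4 = c"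
    and lt: "a < n" "b < n" "c < n"
  shows "d \<le> n \<Longrightarrow> R 5 = d \<Longrightarrow> Rb w R \<Longrightarrow> ih \<le> Suc (length w) \<Longrightarrow>
    reachQ w (77, ih, R) (if \<exists>d'. d \<le> d' \<and> d' < n \<and> P4at w n a b c d' then 183 else 176) (agr 5 R)"
  using R
proof (induction "n - d" arbitrary: d R ih)
  case 0
  then have d: "d = n" by simp
  have "reachQ w (176, ih, R) 176 (agr 5 R)" using 0 by (intro rfin) (auto simp: agr_def)
  then have "reachQ w (77, ih, R) 176 (agr 5 R)" using 0 d by (intro rstep) (auto simp: cstep_prog pn)
  moreover have "(if \<exists>d'. d \<le> d' \<and> d' < n \<and> P4at w n a b c d' then 183 else 176) = (176::nat)" using d by auto
  ultimately show ?case by simp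
next
  case (Suc k)
  have dn: "d < n" using Suc by simp
  let ?T = "if \<exists>d'. d \<le> d' \<and> d' < n \<and> P4at w n a b c d' then 183 else (176::nat)"
  have body: "reachQ w (78, ih, R) (if P4at w n a b c d then 183 else 174) (agr 6 R)"
    using dbody[OF nn Suc.prems(5,6,7,8) Suc.prems(2) lt dn Suc.prems(3,4)] .
  have "reachQ w (78, ih, R) ?T (agr 5 R)"
  proof (rule reachQ_cont[OF body])
    fix i X assume a: "i \<le> Suc (length w)" "Rb w X" "agr 6 R X"
    show "reachQ w (if P4at w n a b c d then 183 else 174, i, X) ?T (agr 5 R)"
    proof (cases "P4at w n a b c d")
      case True
      then have "?T = 183" using dn by auto
      then show ?thesis using True a by (auto intro!: rfin simp: agr_def)
    next
      case False
      have T: "?T = (if \<exists>d'. Suc d \<le> d' \<and> d' < n \<and> P4at w n a b c d' then 183 else 176)"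
        using False by (metis Suc_leD le_antisym not_less_eq_eq)
      have Xv: "X 0 = n" "X 2 = a" "X 3 = b" "X 4 = c" "X 5 = d" using a(3) Suc.prems unfolding agr_def by auto
      have rb': "Rb w (X(5 := Suc d))" using a(2) dn n_le[OF nn] by (auto intro: Rb_upd)
      have IH: "reachQ w (77, i, X(5 := Suc d)) ?T (agr 5 (X(5 := Suc d)))"
        unfolding T using Suc.hyps(1)[of "Suc d" "X(5 := Suc d)" i] Suc.hyps(2) dn rb' a(1) Xv by auto
      have IH': "reachQ w (77, i, X(5 := Suc d)) ?T (agr 5 R)"
        using reachQ_mono[OF IH] a(3) unfolding agr_def by auto
      have "reachQ w (175, i, X(5 := Suc d)) ?T (agr 5 R)"
        using IH' rb' a(1) by (intro rstep) (auto simp: cstep_prog pn)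
      then show ?thesis using False a Xv by (intro rstep) (auto simp: cstep_prog pn)
    qed
  qed
  then show ?case using Suc.prems dn by (intro rstep) (auto simp: cstep_prog pn)
qed


lemma cloop:
  assumes nn: "n * n = length w" and R: "R 0 = n" "R 2 = a" "R 3 = b"
    and lt: "a < n" "b < n"
  shows "c \<le> n \<Longrightarrow> R 4 = c \<Longrightarrow> Rb w R \<Longrightarrow> ih \<le> Suc (length w) \<Longrightarrow>
    reachQ w (75, ih, R) (if \<exists>c'. c \<le> c' \<and> c' < n \<and> (\<exists>d<n. P4at w n a b c' d) then 183 else (178::nat)) (agr 4 R)"
  using R
proof (induction "n - c" arbitrary: c R ih)
  case 0
  then have c: "c = n" by simp
  have "reachQ w (178, ih, R) 178 (agr 4 R)" using 0 by (intro rfin) (auto simp: agr_def)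
  then have "reachQ w (75, ih, R) 178 (agr 4 R)" using 0 c by (intro rstep) (auto simp: cstep_prog pn)
  moreover have "(if \<exists>c'. c \<le> c' \<and> c' < n \<and> (\<exists>d<n. P4at w n a b c' d) then 183 else 178) = (178::nat)" using c by auto
  ultimately show ?case by simp
next
  case (Suc k)
  have cn: "c < n" using Suc by simp
  let ?T = "if \<exists>c'. c \<le> c' \<and> c' < n \<and> (\<exists>d<n. P4at w n a b c' d) then 183 else (178::nat)"
  have rb0: "Rb w (R(5 := 0))" using Suc.prems by (auto intro: Rb_upd)
  have dl: "reachQ w (77, ih, R(5 := 0)) (if \<exists>d'. 0 \<le> d' \<and> d' < n \<and> P4at w n a b c d' then 183 else 176) (agr 5 (R(5 := 0)))"
    using dloop[OF nn _ _ _ _ lt cn, of "R(5 := 0)" 0 ih] Suc.prems rb0 by auto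
  have "reachQ w (77, ih, R(5 := 0)) ?T (agr 4 R)"
  proof (rule reachQ_cont[OF dl])
    fix i X assume a: "i \<le> Suc (length w)" "Rb w X" "agr 5 (R(5 := 0)) X"
    show "reachQ w (if \<exists>d'. 0 \<le> d' \<and> d' < n \<and> P4at w n a b c d' then 183 else 176, i, X) ?T (agr 4 R)"
    proof (cases "\<exists>d'. 0 \<le> d' \<and> d' < n \<and> P4at w n a b c d'")
      case True
      then have "?T = 183" using cn by auto
      then show ?thesis using True a by (auto intro!: rfin simp: agr_def)
    next
      case False
      have T: "?T = (if \<exists>c'. Suc c \<le> c' \<and> c' < n \<and> (\<exists>d<n. P4at w n a b c' d) then 183 else 178)"
        using False by (metis Suc_leD le_antisym not_less_eq_eq zero_le)
      have Xv: "X 0 = n" "X 2 = a" "X 3 = b" "X 4 = c" using a(3) Suc.prems unfolding agr_def by auto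
      have rb': "Rb w (X(4 := Suc c))" using a(2) cn n_le[OF nn] by (auto intro: Rb_upd)
      have IH: "reachQ w (75, i, X(4 := Suc c)) ?T (agr 4 (X(4 := Suc c)))"
        unfolding T using Suc.hyps(1)[of "Suc c" "X(4 := Suc c)" i] Suc.hyps(2) cn rb' a(1) Xv by auto
      have IH': "reachQ w (75, i, X(4 := Suc c)) ?T (agr 4 R)"
        using reachQ_mono[OF IH] a(3) unfolding agr_def by auto
      have r: "reachQ w (177, i, X(4 := Suc c)) ?T (agr 4 R)"
        using IH' rb' a(1) by (intro rstep) (auto simp: cstep_prog pn)
      have st: "cstep prog w (176, i, X) = (177, i, X(4 := Suc c))" using Xv by (simp add: cstep_prog pn)
      have e: "(if \<exists>d'. 0 \<le> d' \<and> d' < n \<and> P4at w n a b c d' then 183 else 176) = (176::nat)" using False by simp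
      show ?thesis unfolding e by (rule rstep'[OF st _ a(1,2) r]) simp
    qed
  qed
  then have "reachQ w (76, ih, R) ?T (agr 4 R)" using Suc.prems by (intro rstep) (auto simp: cstep_prog pn)
  then show ?case using Suc.prems cn by (intro rstep) (auto simp: cstep_prog pn)
qed

definition symbad :: "bool list \<Rightarrow> nat \<Rightarrow> nat \<Rightarrow> nat \<Rightarrow> bool" where
  "symbad w n a b \<longleftrightarrow> (E w n a b \<noteq> E w n b a) \<or> (a = b \<and> E w n a b)"

lemma ca25: "code_at prog 25 (read 25 2 3 183 41 57)"
  by (simp add: code_at_def prog_def read_def home_def rightn_def)
lemma ca41: "code_at prog 41 (read 41 3 2 183 74 183)"
  by (simp add: code_at_def prog_def read_def home_def rightn_def)
lemma ca58: "code_at prog 58 (read 58 3 2 183 183 74)"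
  by (simp add: code_at_def prog_def read_def home_def rightn_def)

lemma symcheck:
  assumes nn: "n * n = length w" and R: "R 0 = n" "R 2 = a" "R 3 = b"
    and lt: "a < n" "b < n" and rb: "Rb w R" and ih: "ih \<le> Suc (length w)"
  shows "reachQ w (25, ih, R) (if symbad w n a b then 183 else 74) (agr 6 R)"
proof -
  let ?L = "Suc (length w)"
  have pl: "length prog = 184" by (rule prog_len)
  have fin: "reachQ w (q, i, X) q (agr 6 R)" if "q < 184" "i \<le> ?L" "Rb w X" "agr 6 R X" for q i X
    using rfin that by blast
  have L41: "reachQ w (41, i, X) (if E w n b a then 183 else 74) (agr 6 R)"
    if "i \<le> ?L" "Rb w X" "agr 6 R X" for i X
  proof (rule read_step[OF ca41 _ _ _ _ _ nn _ _ _ that(2,1)])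
    fix i' X' assume a: "i' \<le> ?L" "Rb w X'" "\<forall>r<6. X' r = X r"
    have ag: "agr 6 R X'" using a(3) that(3) unfolding agr_def by simp
    show "reachQ w (if E w n (X 3) (X 2) then 183 else 74, i', X') (if E w n b a then 183 else 74) (agr 6 R)"
      using fin[OF _ a(1,2) ag] that(3) R unfolding agr_def by auto
  qed (use that R lt pl in \<open>auto simp: agr_def\<close>)
  have L58: "reachQ w (58, i, X) (if E w n b a then 74 else 183) (agr 6 R)"
    if "i \<le> ?L" "Rb w X" "agr 6 R X" for i X
  proof (rule read_step[OF ca58 _ _ _ _ _ nn _ _ _ that(2,1)])
    fix i' X' assume a: "i' \<le> ?L" "Rb w X'" "\<forall>r<6. X' r = X r"
    have ag: "agr 6 R X'" using a(3) that(3) unfolding agr_def by simp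
    show "reachQ w (if E w n (X 3) (X 2) then 74 else 183, i', X') (if E w n b a then 74 else 183) (agr 6 R)"
      using fin[OF _ a(1,2) ag] that(3) R unfolding agr_def by auto
  qed (use that R lt pl in \<open>auto simp: agr_def\<close>)
  have L57: "reachQ w (57, i, X) (if a = b then 183 else if E w n b a then 74 else 183) (agr 6 R)"
    if "i \<le> ?L" "Rb w X" "agr 6 R X" for i X
  proof (cases "a = b")
    case True
    have "X 2 = X 3" using that(3) R True unfolding agr_def by auto
    then show ?thesis using True that by (intro rstep) (auto simp: cstep_prog pn intro!: fin)
  next
    case False
    have "X 2 \<noteq> X 3" using that(3) R False unfolding agr_def by auto
    then show ?thesis using False that L58[OF that] by (intro rstep) (auto simp: cstep_prog pn)
  qed
  show ?thesis
  proof (rule read_step[OF ca25 _ _ _ _ _ nn _ _ _ rb ih])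
    fix i' X' assume a: "i' \<le> ?L" "Rb w X'" "\<forall>r<6. X' r = R r"
    have ag: "agr 6 R X'" using a(3) unfolding agr_def by simp
    have l41: "reachQ w (41, i', X') (if E w n b a then 183 else 74) (agr 6 R)" by (rule L41[OF a(1,2) ag])
    have l57: "reachQ w (57, i', X') (if a = b then 183 else if E w n b a then 74 else 183) (agr 6 R)" by (rule L57[OF a(1,2) ag])
    show "reachQ w (if E w n (R 2) (R 3) then 57 else 41, i', X') (if symbad w n a b then 183 else 74) (agr 6 R)"
    proof (cases "E w n a b")
      case True
      have "(if symbad w n a b then 183 else 74) = (if a = b then 183 else if E w n b a then 74 else (183::nat))"
        using True unfolding symbad_def by auto
      then show ?thesis using True l57 R by simp
    next
      case False
      have "(if symbad w n a b then 183 else 74) = (if E w n b a then 183 else (74::nat))"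
        using False unfolding symbad_def by auto
      then show ?thesis using False l41 R by simp
    qed
  qed (use R lt pl in auto)
qed

definition badB :: "bool list \<Rightarrow> nat \<Rightarrow> nat \<Rightarrow> nat \<Rightarrow> bool" where
  "badB w n a b \<longleftrightarrow> symbad w n a b \<or> (\<exists>c<n. \<exists>d<n. P4at w n a b c d)"

lemma bloop:
  assumes nn: "n * n = length w" and R: "R 0 = n" "R 2 = a" and lt: "a < n"
  shows "b \<le> n \<Longrightarrow> R 3 = b \<Longrightarrow> Rb w R \<Longrightarrow> ih \<le> Suc (length w) \<Longrightarrow>
    reachQ w (24, ih, R) (if \<exists>b'. b \<le> b' \<and> b' < n \<and> badB w n a b' then 183 else (180::nat)) (agr 3 R)"
  using R
proof (induction "n - b" arbitrary: b R ih)
  case 0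
  then have b: "b = n" by simp
  have "reachQ w (180, ih, R) 180 (agr 3 R)" using 0 by (intro rfin) (auto simp: agr_def)
  then have "reachQ w (24, ih, R) 180 (agr 3 R)" using 0 b by (intro rstep) (auto simp: cstep_prog pn)
  moreover have "(if \<exists>b'. b \<le> b' \<and> b' < n \<and> badB w n a b' then 183 else 180) = (180::nat)" using b by auto
  ultimately show ?case by simp
next
  case (Suc k)
  have bn: "b < n" using Suc by simp
  let ?T = "if \<exists>b'. b \<le> b' \<and> b' < n \<and> badB w n a b' then 183 else (180::nat)"
  have sc: "reachQ w (25, ih, R) (if symbad w n a b then 183 else 74) (agr 6 R)"
    using symcheck[OF nn Suc.prems(5,6,2) lt bn Suc.prems(3,4)] .
  have "reachQ w (25, ih, R) ?T (agr 3 R)"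
  proof (rule reachQ_cont[OF sc])
    fix i X assume a: "i \<le> Suc (length w)" "Rb w X" "agr 6 R X"
    have Xv: "X 0 = n" "X 2 = a" "X 3 = b" using a(3) Suc.prems unfolding agr_def by auto
    show "reachQ w (if symbad w n a b then 183 else 74, i, X) ?T (agr 3 R)"
    proof (cases "symbad w n a b")
      case True
      then have "?T = 183" using bn unfolding badB_def by auto
      then show ?thesis using True a by (auto intro!: rfin simp: agr_def)
    next
      case ns: False
      have rb0: "Rb w (X(4 := 0))" using a(2) by (auto intro: Rb_upd)
      have cl: "reachQ w (75, i, X(4 := 0)) (if \<exists>c'. 0 \<le> c' \<and> c' < n \<and> (\<exists>d<n. P4at w n a b c' d) then 183 else (178::nat)) (agr 4 (X(4 := 0)))"
        using cloop[OF nn _ _ _ lt bn, of "X(4 := 0)" 0 i] Xv rb0 a(1) by auto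
      have "reachQ w (75, i, X(4 := 0)) ?T (agr 3 R)"
      proof (rule reachQ_cont[OF cl])
        fix i2 Y assume a2: "i2 \<le> Suc (length w)" "Rb w Y" "agr 4 (X(4 := 0)) Y"
        show "reachQ w (if \<exists>c'. 0 \<le> c' \<and> c' < n \<and> (\<exists>d<n. P4at w n a b c' d) then 183 else 178, i2, Y) ?T (agr 3 R)"
        proof (cases "\<exists>c'. 0 \<le> c' \<and> c' < n \<and> (\<exists>d<n. P4at w n a b c' d)")
          case True
          then have "?T = 183" using bn unfolding badB_def by auto
          then show ?thesis using True a2 a(3) by (auto intro!: rfin simp: agr_def)
        next
          case False
          have nb: "\<not> badB w n a b" using ns False unfolding badB_def by auto
          have T: "?T = (if \<exists>b'. Suc b \<le> b' \<and> b' < n \<and> badB w n a b' then 183 else 180)"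
            using nb by (metis Suc_leD le_antisym not_less_eq_eq)
          have Yv: "Y 0 = n" "Y 2 = a" "Y 3 = b" using a2(3) Xv unfolding agr_def by auto
          have rb': "Rb w (Y(3 := Suc b))" using a2(2) bn n_le[OF nn] by (auto intro: Rb_upd)
          have IH: "reachQ w (24, i2, Y(3 := Suc b)) ?T (agr 3 (Y(3 := Suc b)))"
            unfolding T using Suc.hyps(1)[of "Suc b" "Y(3 := Suc b)" i2] Suc.hyps(2) bn rb' a2(1) Yv by auto
          have IH': "reachQ w (24, i2, Y(3 := Suc b)) ?T (agr 3 R)"
            using reachQ_mono[OF IH] a(3) a2(3) unfolding agr_def by auto
          have r: "reachQ w (179, i2, Y(3 := Suc b)) ?T (agr 3 R)"
            using IH' rb' a2(1) by (intro rstep) (auto simp: cstep_prog pn)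
          have st: "cstep prog w (178, i2, Y) = (179, i2, Y(3 := Suc b))" using Yv by (simp add: cstep_prog pn)
          have e: "(if \<exists>c'. 0 \<le> c' \<and> c' < n \<and> (\<exists>d<n. P4at w n a b c' d) then 183 else 178) = (178::nat)" using False by simp
          show ?thesis unfolding e by (rule rstep'[OF st _ a2(1,2) r]) simp
        qed
      qed
      then show ?thesis using ns a by (intro rstep) (auto simp: cstep_prog pn)
    qed
  qed
  then show ?case using Suc.prems bn by (intro rstep) (auto simp: cstep_prog pn)
qed

lemma aloop:
  assumes nn: "n * n = length w" and R: "R 0 = n"
  shows "a \<le> n \<Longrightarrow> R 2 = a \<Longrightarrow> Rb w R \<Longrightarrow> ih \<le> Suc (length w) \<Longrightarrow>
    reachQ w (22, ih, R) (if \<exists>a'. a \<le> a' \<and> a' < n \<and> (\<exists>b<n. badB w n a' b) then 183 else (182::nat)) (\<lambda>_. True)"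
  using R
proof (induction "n - a" arbitrary: a R ih)
  case 0
  then have a: "a = n" by simp
  have "reachQ w (182, ih, R) 182 (\<lambda>_. True)" using 0 by (intro rfin) auto
  then have "reachQ w (22, ih, R) 182 (\<lambda>_. True)" using 0 a by (intro rstep) (auto simp: cstep_prog pn)
  moreover have "(if \<exists>a'. a \<le> a' \<and> a' < n \<and> (\<exists>b<n. badB w n a' b) then 183 else 182) = (182::nat)" using a by auto
  ultimately show ?case by simp
next
  case (Suc k)
  have an: "a < n" using Suc by simp
  let ?T = "if \<exists>a'. a \<le> a' \<and> a' < n \<and> (\<exists>b<n. badB w n a' b) then 183 else (182::nat)"
  have rb0: "Rb w (R(3 := 0))" using Suc.prems by (auto intro: Rb_upd)
  have bl: "reachQ w (24, ih, R(3 := 0)) (if \<exists>b'. 0 \<le> b' \<and> b' < n \<and> badB w n a b' then 183 else (180::nat)) (agr 3 (R(3 := 0)))"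
    using bloop[OF nn _ _ an, of "R(3 := 0)" 0 ih] Suc.prems rb0 by auto
  have "reachQ w (24, ih, R(3 := 0)) ?T (\<lambda>_. True)"
  proof (rule reachQ_cont[OF bl])
    fix i X assume a: "i \<le> Suc (length w)" "Rb w X" "agr 3 (R(3 := 0)) X"
    show "reachQ w (if \<exists>b'. 0 \<le> b' \<and> b' < n \<and> badB w n a b' then 183 else 180, i, X) ?T (\<lambda>_. True)"
    proof (cases "\<exists>b'. 0 \<le> b' \<and> b' < n \<and> badB w n a b'")
      case True
      then have "?T = 183" using an by auto
      then show ?thesis using True a by (auto intro!: rfin)
    next
      case False
      have T: "?T = (if \<exists>a'. Suc a \<le> a' \<and> a' < n \<and> (\<exists>b<n. badB w n a' b) then 183 else 182)"
        using False by (metis Suc_leD le_antisym not_less_eq_eq zero_le)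
      have Xv: "X 0 = n" "X 2 = a" using a(3) Suc.prems unfolding agr_def by auto
      have rb': "Rb w (X(2 := Suc a))" using a(2) an n_le[OF nn] by (auto intro: Rb_upd)
      have IH: "reachQ w (22, i, X(2 := Suc a)) ?T (\<lambda>_. True)"
        unfolding T using Suc.hyps(1)[of "Suc a" "X(2 := Suc a)" i] Suc.hyps(2) an rb' a(1) Xv by auto
      have r: "reachQ w (181, i, X(2 := Suc a)) ?T (\<lambda>_. True)"
        using IH rb' a(1) by (intro rstep) (auto simp: cstep_prog pn)
      have st: "cstep prog w (180, i, X) = (181, i, X(2 := Suc a))" using Xv by (simp add: cstep_prog pn)
      have e: "(if \<exists>b'. 0 \<le> b' \<and> b' < n \<and> badB w n a b' then 183 else 180) = (180::nat)" using False by simp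
      show ?thesis unfolding e by (rule rstep'[OF st _ a(1,2) r]) simp
    qed
  qed
  note r24 = this
  have s23: "cstep prog w (23, ih, R) = (24, ih, R(3 := 0))" by (simp add: cstep_prog pn)
  have s22: "cstep prog w (22, ih, R) = (23, ih, R)" using Suc.prems an by (simp add: cstep_prog pn)
  have r23: "reachQ w (23, ih, R) ?T (\<lambda>_. True)" by (rule rstep'[OF s23 _ _ _ r24]) (use Suc.prems in auto)
  show ?case by (rule rstep'[OF s22 _ _ _ r23]) (use Suc.prems in auto)
qed



lemma sq_inj: "(k::nat) * k = n * n \<Longrightarrow> k = n"
proof (rule ccontr)
  assume e: "k * k = n * n" and ne: "k \<noteq> n"
  show False
  proof (cases "k < n")
    case True
    then have "k * k < n * n" by (simp add: mult_strict_mono)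
    then show False using e by simp
  next
    case False
    then have "n < k" using ne by simp
    then have "n * n < k * k" by (simp add: mult_strict_mono)
    then show False using e by simp
  qed
qed

lemma ca1: "code_at prog 1 (read 1 1 1 183 17 17)"
  by (simp add: code_at_def prog_def read_def home_def rightn_def)

lemma findloop:
  shows "R 0 = Suc m \<Longrightarrow> R 1 = m \<Longrightarrow> (\<forall>k. 1 \<le> k \<longrightarrow> k \<le> m \<longrightarrow> k * k < length w) \<Longrightarrow> Rb w R \<Longrightarrow>
    ih \<le> Suc (length w) \<Longrightarrow>
    reachQ w (1, ih, R) (if \<exists>k. 1 \<le> k \<and> k * k = length w then 21 else (183::nat))
      (\<lambda>X. (\<exists>k. 1 \<le> k \<and> k * k = length w) \<longrightarrow> X 0 * X 0 = length w)"
proof (induction "length w - m" arbitrary: m R ih rule: less_induct)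
  case less
  let ?L = "length w"
  let ?Q = "\<lambda>X. (\<exists>k. 1 \<le> k \<and> k * k = ?L) \<longrightarrow> X 0 * X 0 = ?L"
  define sq where "sq = Suc m * Suc m"
  define pos where "pos = min (Suc ?L) (Suc (R 1 * R 0 + R 1))"
  have pe: "pos = min (Suc ?L) sq" unfolding pos_def sq_def using less.prems(1,2) by simp
  define R1 where "R1 = R(6 := R 1, 7 := R 1)"
  have c1: "creach prog w (1, ih, R) (if inp_sym w pos = 0 then 183 else if inp_sym w pos = 1 then 17 else 17, pos, R1)"
    using read_spec[OF ca1 _ _ _ _ _ _ _ less.prems(4,5)] prog_len unfolding pos_def R1_def Let_def by simp
  have rb1: "Rb w R1" using less.prems(4) unfolding R1_def Rb_def by auto
  have R1v: "R1 0 = Suc m" "R1 1 = m" using less.prems unfolding R1_def by auto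
  show ?case
  proof (cases "?L < sq")
    case True
    have p: "pos = Suc ?L" using True pe by simp
    have is0: "inp_sym w pos = 0" unfolding p inp_sym_def by simp
    have nk: "\<not> (\<exists>k. 1 \<le> k \<and> k * k = ?L)"
    proof
      assume "\<exists>k. 1 \<le> k \<and> k * k = ?L"
      then obtain k where k: "1 \<le> k" "k * k = ?L" by blast
      show False
      proof (cases "k \<le> m")
        case True then show False using less.prems(3) k by fastforce
      next
        case False
        then have sk: "Suc m \<le> k" by simp
        have "sq \<le> k * k" unfolding sq_def using mult_le_mono[OF sk sk] .
        then show False using k True by simp
      qed
    qed
    have "reachQ w (183, pos, R1) 183 ?Q" using nk rb1 by (intro rfin) (auto simp: p)
    then have r: "reachQ w (1, ih, R) 183 ?Q" using reachQ_creach[OF c1] is0 by simp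
    have e: "(if \<exists>k. 1 \<le> k \<and> k * k = ?L then 21 else 183) = (183::nat)" using nk by simp
    show ?thesis unfolding e by (rule r)
  next
    case False
    then have p: "pos = sq" using pe by simp
    have sq1: "1 \<le> sq" unfolding sq_def by simp
    have isn: "inp_sym w pos \<noteq> 0" unfolding p inp_sym_def using False sq1 by auto
    have c1': "creach prog w (1, ih, R) (17, sq, R1)" using c1 isn p by (simp split: if_splits)
    have s17: "cstep prog w (17, sq, R1) = (18, min (Suc ?L) (Suc sq), R1)" by (simp add: cstep_prog pn)
    show ?thesis
    proof (cases "sq = ?L")
      case True
      have is0: "inp_sym w (min (Suc ?L) (Suc sq)) = 0" using True unfolding inp_sym_def by simp
      have s18: "cstep prog w (18, min (Suc ?L) (Suc sq), R1) = (21, min (Suc ?L) (Suc sq), R1)"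
        using is0 by (simp add: cstep_prog pn)
      have ex: "\<exists>k. 1 \<le> k \<and> k * k = ?L" using True unfolding sq_def by (intro exI[of _ "Suc m"]) simp
      have "reachQ w (21, min (Suc ?L) (Suc sq), R1) 21 ?Q" using rb1 True R1v unfolding sq_def by (intro rfin) auto
      then have "reachQ w (17, sq, R1) 21 ?Q"
        using rb1 False by (intro rstep'[OF s17] rstep'[OF s18]) auto
      then have r: "reachQ w (1, ih, R) 21 ?Q" using reachQ_creach[OF c1'] by simp
      have e: "(if \<exists>k. 1 \<le> k \<and> k * k = ?L then 21 else 183) = (21::nat)" using ex by simp
      show ?thesis unfolding e by (rule r)
    next
      case ne: False
      then have lt: "sq < ?L" using False by simp
      have isn2: "inp_sym w (min (Suc ?L) (Suc sq)) \<noteq> 0" using lt unfolding inp_sym_def by simp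
      have s18: "cstep prog w (18, min (Suc ?L) (Suc sq), R1) = (19, Suc sq, R1)"
        using isn2 lt by (simp add: cstep_prog pn split: if_splits)
      define R2 where "R2 = R1(0 := Suc (Suc m), 1 := Suc m)"
      have s19: "cstep prog w (19, Suc sq, R1) = (20, Suc sq, R1(0 := Suc (Suc m)))"
        using R1v by (simp add: cstep_prog pn)
      have s20: "cstep prog w (20, Suc sq, R1(0 := Suc (Suc m))) = (1, Suc sq, R2)"
        using R1v unfolding R2_def by (simp add: cstep_prog pn)
      have msq: "Suc m \<le> sq" unfolding sq_def by simp
      have rb2: "Rb w (R1(0 := Suc (Suc m)))" "Rb w R2"
        using rb1 msq lt unfolding R2_def Rb_def by auto
      have inv2: "\<forall>k. 1 \<le> k \<longrightarrow> k \<le> Suc m \<longrightarrow> k * k < ?L"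
        using less.prems(3) lt unfolding sq_def by (metis le_Suc_eq)
      have IH: "reachQ w (1, Suc sq, R2) (if \<exists>k. 1 \<le> k \<and> k * k = ?L then 21 else (183::nat)) ?Q"
        using less.hyps[of "Suc m" R2 "Suc sq"] msq lt inv2 rb2(2) unfolding R2_def by auto
      have "reachQ w (17, sq, R1) (if \<exists>k. 1 \<le> k \<and> k * k = ?L then 21 else (183::nat)) ?Q"
        by (rule rstep'[OF s17 _ _ rb1 rstep'[OF s18 _ _ rb1 rstep'[OF s19 _ _ rb1 rstep'[OF s20 _ _ rb2(1) IH]]]])
           (use lt in auto)
      then show ?thesis using reachQ_creach[OF c1'] by blast
    qed
  qed
qed

definition good :: "bool list \<Rightarrow> bool" where
  "good w \<longleftrightarrow> (\<exists>n. 1 \<le> n \<and> n * n = length w \<and> \<not> (\<exists>a<n. \<exists>b<n. badB w n a b))"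

lemma cm_main: "reachQ w (0, 0, \<lambda>_. 0) (if good w then 182 else 183) (\<lambda>_. True)"
proof -
  let ?L = "length w"
  let ?T = "if good w then 182 else (183::nat)"
  have s0: "cstep prog w (0, 0, \<lambda>_. 0) = (1, 0, (\<lambda>_. 0)(0 := 1))" by (simp add: cstep_prog pn)
  have rb0: "Rb w (\<lambda>_. 0)" "Rb w ((\<lambda>_. 0)(0 := 1))" unfolding Rb_def by auto
  have fl: "reachQ w (1, 0, (\<lambda>_. 0)(0 := 1)) (if \<exists>k. 1 \<le> k \<and> k * k = ?L then 21 else (183::nat))
      (\<lambda>X. (\<exists>k. 1 \<le> k \<and> k * k = ?L) \<longrightarrow> X 0 * X 0 = ?L)"
    using findloop[of "(\<lambda>_. 0)(0 := 1)" 0 w 0] rb0 by simp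
  have "reachQ w (1, 0, (\<lambda>_. 0)(0 := 1)) ?T (\<lambda>_. True)"
  proof (rule reachQ_cont[OF fl])
    fix i X assume a: "i \<le> Suc ?L" "Rb w X" "(\<exists>k. 1 \<le> k \<and> k * k = ?L) \<longrightarrow> X 0 * X 0 = ?L"
    show "reachQ w (if \<exists>k. 1 \<le> k \<and> k * k = ?L then 21 else 183, i, X) ?T (\<lambda>_. True)"
    proof (cases "\<exists>k. 1 \<le> k \<and> k * k = ?L")
      case False
      then have "\<not> good w" unfolding good_def by auto
      then show ?thesis using False a by (auto intro!: rfin)
    next
      case True
      then obtain k where k: "1 \<le> k" "k * k = ?L" by blast
      define n where "n = X 0"
      have nn: "n * n = ?L" using a(3) True unfolding n_def by simp
      have kn: "k = n" using sq_inj[of k n] k nn by simp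
      have n1: "1 \<le> n" using k kn by simp
      have g: "good w \<longleftrightarrow> \<not> (\<exists>a<n. \<exists>b<n. badB w n a b)"
        unfolding good_def using nn n1 sq_inj by (metis)
      have rb': "Rb w (X(2 := 0))" using a(2) by (auto intro: Rb_upd)
      have al: "reachQ w (22, i, X(2 := 0)) (if \<exists>a'. 0 \<le> a' \<and> a' < n \<and> (\<exists>b<n. badB w n a' b) then 183 else (182::nat)) (\<lambda>_. True)"
        using aloop[OF nn, of "X(2 := 0)" 0 i] rb' a(1) unfolding n_def by auto
      have e: "(if \<exists>a'. 0 \<le> a' \<and> a' < n \<and> (\<exists>b<n. badB w n a' b) then 183 else (182::nat)) = ?T"
        using g by auto
      have s21: "cstep prog w (21, i, X) = (22, i, X(2 := 0))" by (simp add: cstep_prog pn)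
      have "reachQ w (21, i, X) ?T (\<lambda>_. True)" by (rule rstep'[OF s21 _ a(1,2) al[unfolded e]]) simp
      then show ?thesis using True by simp
    qed
  qed
  note r = this
  show ?thesis by (rule rstep'[OF s0 _ _ rb0(1) r]) auto
qed


lemma good_iff: "good w \<longleftrightarrow> w \<in> cograph_lang"
proof
  assume "good w"
  then obtain n where n: "1 \<le> n" "n * n = length w" and nb: "\<not> (\<exists>a<n. \<exists>b<n. badB w n a b)"
    unfolding good_def by blast
  have sym: "\<forall>i<n. \<forall>j<n. w ! (i * n + j) = w ! (j * n + i)"
    using nb unfolding badB_def symbad_def E_def by blast
  have irr: "\<forall>i<n. \<not> w ! (i * n + i)"
    using nb unfolding badB_def symbad_def E_def by blast
  have np: "\<not> P4 (\<lambda>i j. w ! (i * n + j)) {0..<n}"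
    using nb unfolding badB_def P4at_def E_def P4_def by auto
  have si: "symirr (\<lambda>i j. w ! (i * n + j)) {0..<n}" using sym irr unfolding symirr_def by auto
  have "is_cograph {0..<n} (\<lambda>i j. w ! (i * n + j))"
    using cograph_iff[OF _ _ si] np n(1) by auto
  moreover have "encodes_graph w n" unfolding encodes_graph_def using n sym irr by auto
  ultimately show "w \<in> cograph_lang" unfolding cograph_lang_def by blast
next
  assume "w \<in> cograph_lang"
  then obtain n where eg: "encodes_graph w n" and cg: "is_cograph {0..<n} (\<lambda>i j. w ! (i * n + j))"
    unfolding cograph_lang_def by blast
  have n: "1 \<le> n" "n * n = length w" and sym: "\<forall>i<n. \<forall>j<n. w ! (i * n + j) = w ! (j * n + i)"
    and irr: "\<forall>i<n. \<not> w ! (i * n + i)"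
    using eg unfolding encodes_graph_def by auto
  have np: "\<not> P4 (\<lambda>i j. w ! (i * n + j)) {0..<n}" using cograph_P4free[OF cg] .
  have "\<not> (\<exists>a<n. \<exists>b<n. badB w n a b)"
  proof
    assume "\<exists>a<n. \<exists>b<n. badB w n a b"
    then obtain a b where ab: "a < n" "b < n" "badB w n a b" by blast
    show False
    proof (cases "symbad w n a b")
      case True
      then show False using sym irr ab unfolding symbad_def E_def by auto
    next
      case False
      then obtain c d where "c < n" "d < n" "P4at w n a b c d" using ab unfolding badB_def by blast
      then have "P4 (\<lambda>i j. w ! (i * n + j)) {0..<n}" using ab unfolding P4_def P4at_def E_def
        by (intro bexI[of _ a] bexI[of _ b] bexI[of _ c] bexI[of _ d]) auto
      then show False using np by blast
    qed
  qed
  then show "good w" unfolding good_def using n by blast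
qed

lemma halt_stable:
  assumes "state_of (run M w t) = acc M \<or> state_of (run M w t) = rej M"
  shows "run M w (t + k) = run M w t"
proof (induction k)
  case 0 then show ?case by simp
next
  case (Suc k)
  have "run M w (t + Suc k) = step M w (run M w (t + k))" unfolding run_def by simp
  also have "\<dots> = step M w (run M w t)" using Suc by simp
  also have "\<dots> = run M w t"
    using assms unfolding step_def state_of_def by (cases "run M w t") auto
  finally show ?case .
qed

lemma Sp_log: assumes "Sp w h" shows "real h \<le> 2 * log 2 (real (length w) + 2) + 2"
proof -
  have l1: "1 \<le> log 2 (real (length w) + 2)" by simp
  show ?thesis
  proof (cases "h \<le> 2")
    case True
    then have "real h \<le> 2" by simp
    then show ?thesis using l1 by linarith
  next
    case False
    have "(2::real) powr real (h - 2) \<le> real (length w) + 1"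
      using assms unfolding Sp_def by (simp add: powr_realpow) (metis of_nat_Suc of_nat_le_iff of_nat_numeral of_nat_power add.commute)
    then have "real (h - 2) \<le> log 2 (real (length w) + 1)" by (subst le_log_iff) auto
    moreover have "log 2 (real (length w) + 1) \<le> log 2 (real (length w) + 2)" by simp
    moreover have "real (h - 2) = real h - 2" using False by simp
    ultimately show ?thesis using l1 by linarith
  qed
qed

lemma tm_run:
  "\<exists>t. state_of (run (tmM prog) w t) = (if good w then 0 else 1) \<and>
     (\<forall>t'\<le>t. Sp w (work_head (run (tmM prog) w t')))"
proof -
  let ?M = "tmM prog"
  let ?q = "if good w then 182 else (183::nat)"
  obtain ih R where cr: "creach prog w (0, 0, \<lambda>_. 0) (?q, ih, R)"
    using cm_main[of w] unfolding reachQ_def by blast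
  obtain k where k: "(cstep prog w ^^ k) (0, 0, \<lambda>_. 0) = (?q, ih, R)" "\<forall>j\<le>k. cB prog w ((cstep prog w ^^ j) (0, 0, \<lambda>_. 0))"
    using cr unfolding creach_def by blast
  have i0: "init_conf ?M = (2, 0, 0, \<lambda>_. 0)" unfolding init_conf_def tmM_def by simp
  have mk0: "(\<lambda>_. 0::nat)(0 := 1) = mk_tape []" unfolding mk_tape_def by (auto simp: fun_eq_iff)
  have s0: "step ?M w (init_conf ?M) = (st 0 0, 0, 0, mk_tape [])"
    unfolding i0 step_def using mk0 by (simp add: tmM_def tdelta_def tgt_def st_def prog_len)
  have rel0: "tmrel w (0, 0, \<lambda>_. 0) (st 0 0, 0, 0, mk_tape [])"
    unfolding tmrel_def winv_def by (simp only: case_prod_conv) (intro exI[of _ "[]"], simp)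
  obtain tc' where tc': "treach ?M w (Sp w) (st 0 0, 0, 0, mk_tape []) tc'" "tmrel w (?q, ih, R) tc'"
    using sim_run[OF prog_ok k(2) rel0] k(1) by auto
  obtain cs where tcs: "tc' = (st ?q 0, ih, 0, mk_tape cs)" using tc'(2) unfolding tmrel_def by auto
  have ihb: "ih \<le> Suc (length w)" using k(2) k(1) unfolding cB_def by (metis (no_types, lifting) case_prod_conv order_refl)
  have pq: "?q < length prog" by (simp add: prog_len)
  have sf: "step ?M w tc' = (if good w then 0 else 1, ih, 0, mk_tape cs)"
    unfolding tcs using step_disp[OF pq refl ihb, of 0 "mk_tape cs"] pn by (simp split: if_splits)
  define fin where "fin = (if good w then 0 else (1::nat), ih, 0::nat, mk_tape cs)"
  have t1: "treach ?M w (Sp w) tc' fin"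
    unfolding fin_def by (rule treach_step_eq[OF sf]) (auto intro: treach_refl simp: tcs work_head_def Sp0)
  have t0: "treach ?M w (Sp w) (init_conf ?M) fin"
    by (rule treach_step_eq[OF s0]) (use i0 Sp0 treach_trans[OF tc'(1) t1] in \<open>auto simp: work_head_def\<close>)
  then obtain t where t: "(step ?M w ^^ t) (init_conf ?M) = fin" "\<forall>j\<le>t. Sp w (work_head ((step ?M w ^^ j) (init_conf ?M)))"
    unfolding treach_def by blast
  show ?thesis
    by (intro exI[of _ t]) (use t in \<open>auto simp: run_def state_of_def fin_def\<close>)
qed

theorem corollary3p19:
  shows "\<exists>M. wf_tm M \<and> logspace_tm M \<and> decides M cograph_lang"
proof (intro exI[of _ "tmM prog"] conjI)
  let ?M = "tmM prog"
  show "wf_tm ?M" by (rule wf_tmM)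
  show "logspace_tm ?M" unfolding logspace_tm_def
  proof (rule exI[of _ 2], rule allI)
    fix w
    obtain t where t: "state_of (run ?M w t) = (if good w then 0 else 1)" "\<forall>t'\<le>t. Sp w (work_head (run ?M w t'))"
      using tm_run by blast
    have "state_of (run ?M w t) = acc ?M \<or> state_of (run ?M w t) = rej ?M" using t(1) by (simp add: tmM_def)
    moreover have "\<forall>t'\<le>t. real (work_head (run ?M w t')) \<le> 2 * log 2 (real (length w) + 2) + 2"
      using t(2) Sp_log by blast
    ultimately show "\<exists>t. (state_of (run ?M w t) = acc ?M \<or> state_of (run ?M w t) = rej ?M) \<and>
        (\<forall>t'\<le>t. real (work_head (run ?M w t')) \<le> 2 * log 2 (real (length w) + 2) + 2)" by blast
  qed
  show "decides ?M cograph_lang" unfolding decides_def accepts_def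
  proof (intro allI)
    fix w
    obtain t where t: "state_of (run ?M w t) = (if good w then 0 else 1)"
      using tm_run by blast
    have h: "state_of (run ?M w t) = acc ?M \<or> state_of (run ?M w t) = rej ?M" using t by (simp add: tmM_def)
    show "(\<exists>t. state_of (run ?M w t) = acc ?M) \<longleftrightarrow> w \<in> cograph_lang"
    proof (cases "good w")
      case True
      then show ?thesis using t good_iff by (auto simp: tmM_def)
    next
      case False
      have "\<not> (\<exists>t'. state_of (run ?M w t') = acc ?M)"
      proof
        assume "\<exists>t'. state_of (run ?M w t') = acc ?M"
        then obtain t' where t': "state_of (run ?M w t') = 0" by (auto simp: tmM_def)
        show False
        proof (cases "t' \<le> t")
          case True
          have h': "state_of (run ?M w t') = acc ?M \<or> state_of (run ?M w t') = rej ?M" using t' by (simp add: tmM_def)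
          have "run ?M w t = run ?M w t'" using halt_stable[OF h', of "t - t'"] True by simp
          then show False using t t' False by simp
        next
          case ff: False
          have "run ?M w t' = run ?M w t" using halt_stable[OF h, of "t' - t"] ff by simp
          then show False using t t' False by simp
        qed
      qed
      then show ?thesis using False good_iff by blast
    qed
  qed
qed


end
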